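(* Let $\mathbf Q,\widehat{\mathbf Q}\in\mathbb R^{p\times p}$, where $\mathbf Q$ has rank $r$ with singular values $\sigma_1\ge\dots\ge\sigma_r>0$, left singular vectors $\mathbf g_1,\dots,\mathbf g_r$ and right singular vectors $\mathbf h_1,\dots,\mathbf h_r$, and $\widehat{\mathbf Q}$ has singular values $\widehat\sigma_1\ge\dots\ge\widehat\sigma_p\ge0$ with corresponding right singular vectors $\widehat{\mathbf h}_1,\dots,\widehat{\mathbf h}_p$. For $1\le s\le t\le r$ let $\boldsymbol H=[\mathbf h_s,\dots,\mathbf h_t]$, $\widehat{\boldsymbol H}=[\widehat{\mathbf h}_s,\dots,\widehat{\mathbf h}_t]$, $\boldsymbol G=[\mathbf g_s,\dots,\mathbf g_t]$, $\mathbf H=[\mathbf h_1,\dots,\mathbf h_r]$, and $\Delta=\min\{\sigma_{s-1}-\sigma_s,\ \sigma_t-\sigma_{t+1},\ \sigma_t\}$ with $\sigma_0=+\infty$, $\sigma_{r+1}=0$. Suppose $\Delta>0$ and $\|\widehat{\mathbf Q}-\mathbf Q\|_2\le\Delta/2$. Then there exists an orthogonal matrix $\boldsymbol\Omega\in\mathbb R^{(t-s+1)\times(t-s+1)}$ such that for every $j=1,\dots,p$, $$\|\mathbf e_j^\top(\widehat{\boldsymbol H}\boldsymbol\Omega-\boldsymbol H)\|_2\le\frac2\Delta\|\boldsymbol G^\top(\widehat{\mathbf Q}-\mathbf Q)\mathbf e_j\|_2+\frac{4(1+\sqrt2)}{\Delta}\|\mathbf e_j^\top\mathbf H\|_2\|\widehat{\mathbf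 Q}-\mathbf Q\|_2+\frac8{\Delta^2}\|\widehat{\mathbf Q}-\mathbf Q\|_2^2.$$
   Context: $\mathbf e_j$ is the $j$-th standard basis vector of $\mathbb R^p$; $\|\cdot\|_2$ is the Euclidean norm for vectors and the spectral norm for matrices. *)

theory Defs
  imports "HOL-Analysis.Analysis"
begin

definition outer :: "real^'p \<Rightarrow> real^'p \<Rightarrow> real^'p^'p" where
  "outer g h = (\<chi> a b. g $ a * h $ b)"

definition spec_norm :: "real^'p^'p \<Rightarrow> real" where
  "spec_norm A = onorm (\<lambda>x. A *v x)"

definition orthonormal_on :: "nat set \<Rightarrow> (nat \<Rightarrow> real^'p) \<Rightarrow> bool" where
  "orthonormal_on I v \<longleftrightarrow> (\<forall>i\<in>I. \<forall>k\<in>I. v i \<bullet> v k = (if i = k then 1 else 0))"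

text \<open>Eigengap Delta = min(sigma_{s-1}-sigma_s, sigma_t-sigma_{t+1}, sigma_t),
  with sigma_0 = +infinity and sigma_{r+1} = 0.\<close>
definition gapDelta :: "(nat \<Rightarrow> real) \<Rightarrow> nat \<Rightarrow> nat \<Rightarrow> nat \<Rightarrow> real" where
  "gapDelta \<sigma> r s t =
     (let sig = (\<lambda>i. if i = r + 1 then 0 else \<sigma> i);
          m = min (sig t - sig (t + 1)) (sig t)
      in if s = 1 then m else min (sig (s - 1) - sig s) m)"

end

theory Submission
  imports Defs
begin


lemma on_inner: "orthonormal_on I v \<Longrightarrow> i\<in>I \<Longrightarrow> k\<in>I \<Longrightarrow> v i \<bullet> v k = (if i=k then 1 else 0)"
  unfolding orthonormal_on_def by blast

lemma on_subset: "orthonormal_on I v \<Longrightarrow> J \<subseteq> I \<Longrightarrow> orthonormal_on J v"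
  unfolding orthonormal_on_def by blast

lemma on_sum_inner:
  assumes "orthonormal_on I v" "finite I" "k \<in> I"
  shows "v k \<bullet> (\<Sum>i\<in>I. c i *\<^sub>R v i) = c k"
proof -
  have "v k \<bullet> (\<Sum>i\<in>I. c i *\<^sub>R v i) = (\<Sum>i\<in>I. c i * (if k = i then 1 else 0))"
    by (simp add: inner_sum_right on_inner[OF assms(1) assms(3)])
  also have "\<dots> = c k" using assms(2,3) by (simp add: if_distrib sum.delta cong: if_cong)
  finally show ?thesis .
qed

lemma on_sum_inner':
  assumes "orthonormal_on I v" "finite I" "k \<in> I"
  shows "(\<Sum>i\<in>I. c i *\<^sub>R v i) \<bullet> v k = c k"
  using on_sum_inner[OF assms] by (simp add: inner_commute)

lemma on_sum_sum:
  assumes "orthonormal_on I v" "finite I"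
  shows "(\<Sum>i\<in>I. c i *\<^sub>R v i) \<bullet> (\<Sum>i\<in>I. d i *\<^sub>R v i) = (\<Sum>i\<in>I. c i * d i)"
proof -
  have "(\<Sum>i\<in>I. c i *\<^sub>R v i) \<bullet> (\<Sum>i\<in>I. d i *\<^sub>R v i) = (\<Sum>k\<in>I. c k * (v k \<bullet> (\<Sum>i\<in>I. d i *\<^sub>R v i)))"
    by (simp add: inner_sum_left)
  also have "\<dots> = (\<Sum>k\<in>I. c k * d k)"
    by (rule sum.cong) (simp_all add: on_sum_inner[OF assms])
  finally show ?thesis .
qed

lemma on_norm2:
  assumes "orthonormal_on I v" "finite I"
  shows "(norm (\<Sum>i\<in>I. c i *\<^sub>R v i))\<^sup>2 = (\<Sum>i\<in>I. (c i)\<^sup>2)"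
  using on_sum_sum[OF assms, of c c] by (simp add: power2_eq_square dot_square_norm flip: power2_norm_eq_inner)

lemma on_proj_inner:
  assumes "orthonormal_on I v" "finite I"
  shows "x \<bullet> (\<Sum>i\<in>I. (v i \<bullet> x) *\<^sub>R v i) = (\<Sum>i\<in>I. (v i \<bullet> x)\<^sup>2)"
  by (simp add: inner_sum_right power2_eq_square inner_commute)

lemma on_pyth:
  assumes "orthonormal_on I v" "finite I"
  shows "(norm (x - (\<Sum>i\<in>I. (v i \<bullet> x) *\<^sub>R v i)))\<^sup>2 = (norm x)\<^sup>2 - (\<Sum>i\<in>I. (v i \<bullet> x)\<^sup>2)"
proof -
  let ?p = "(\<Sum>i\<in>I. (v i \<bullet> x) *\<^sub>R v i)"
  have "(norm (x - ?p))\<^sup>2 = (norm x)\<^sup>2 - 2 * (x \<bullet> ?p) + (norm ?p)\<^sup>2"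
    by (simp add: power2_norm_eq_inner inner_diff_left inner_diff_right inner_commute)
  then show ?thesis using on_proj_inner[OF assms, of x] on_norm2[OF assms, of "\<lambda>i. v i \<bullet> x"] by simp
qed

lemma on_bessel:
  assumes "orthonormal_on I v" "finite I"
  shows "(\<Sum>i\<in>I. (v i \<bullet> x)\<^sup>2) \<le> (norm x)\<^sup>2"
proof -
  have "0 \<le> (norm (x - (\<Sum>i\<in>I. (v i \<bullet> x) *\<^sub>R v i)))\<^sup>2" by simp
  then show ?thesis unfolding on_pyth[OF assms, of x] by simp
qed

lemma on_proj_orth:
  assumes "orthonormal_on I v" "finite I" "k \<in> I"
  shows "v k \<bullet> (x - (\<Sum>i\<in>I. (v i \<bullet> x) *\<^sub>R v i)) = 0"
  by (simp add: inner_diff_right on_sum_inner[OF assms])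

lemma outer_mult: "outer g h *v z = (h \<bullet> z) *\<^sub>R g"
  unfolding outer_def vec_eq_iff matrix_vector_mult_def inner_vec_def 
  apply (simp add: mult_ac) by (simp add: sum_distrib_left)

lemma sum_outer_mult:
  "(\<Sum>i\<in>I. a i *\<^sub>R outer (g i) (h i)) *v z = (\<Sum>i\<in>I. (a i * (h i \<bullet> z)) *\<^sub>R g i)"
proof (induction I rule: infinite_finite_induct)
  case (insert x F)
  then show ?case by (simp add: matrix_vector_mult_add_rdistrib outer_mult flip: scaleR_matrix_vector_assoc)
qed simp_all


lemma sq_le_lin: "(n::real)\<^sup>2 \<le> a * n \<Longrightarrow> 0 \<le> a \<Longrightarrow> 0 \<le> n \<Longrightarrow> n \<le> a"
proof (cases "n = 0")
  case False
  assume "n\<^sup>2 \<le> a * n" "0 \<le> n"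
  then have "n * n \<le> a * n" "0 < n" using False by (auto simp: power2_eq_square)
  then show ?thesis by (simp add: mult_le_cancel_right)
qed simp

locale setting =
  fixes Q Qh :: "real^'p^'p"
    and r s t :: nat
    and \<sigma> \<sigma>h :: "nat \<Rightarrow> real"
    and g h gh hh :: "nat \<Rightarrow> real^'p"
  assumes svd_Q: "Q = (\<Sum>i=1..r. \<sigma> i *\<^sub>R outer (g i) (h i))"
    and sig_pos: "\<forall>i\<in>{1..r}. \<sigma> i > 0"
    and sig_mono: "\<forall>i\<in>{1..r}. \<forall>k\<in>{1..r}. i \<le> k \<longrightarrow> \<sigma> k \<le> \<sigma> i"
    and g_on: "orthonormal_on {1..r} g"
    and h_on: "orthonormal_on {1..r} h"
    and svd_Qh: "Qh = (\<Sum>i=1..CARD('p). \<sigma>h i *\<^sub>R outer (gh i) (hh i))"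
    and sigh_nonneg: "\<forall>i\<in>{1..CARD('p)}. \<sigma>h i \<ge> 0"
    and sigh_mono: "\<forall>i\<in>{1..CARD('p)}. \<forall>k\<in>{1..CARD('p)}. i \<le> k \<longrightarrow> \<sigma>h k \<le> \<sigma>h i"
    and gh_on: "orthonormal_on {1..CARD('p)} gh"
    and hh_on: "orthonormal_on {1..CARD('p)} hh"
    and st: "1 \<le> s" "s \<le> t" "t \<le> r"
    and Delta_pos: "gapDelta \<sigma> r s t > 0"
    and pert: "spec_norm (Qh - Q) \<le> gapDelta \<sigma> r s t / 2"
begin


abbreviation "S \<equiv> {s..t}"
abbreviation "\<epsilon> \<equiv> spec_norm (Qh - Q)"
abbreviation "\<Delta> \<equiv> gapDelta \<sigma> r s t"
abbreviation "E \<equiv> Qh - Q"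

definition Qt :: "real^'p \<Rightarrow> real^'p" where
  "Qt z = (\<Sum>i\<in>{1..r}. (\<sigma> i * (g i \<bullet> z)) *\<^sub>R h i)"
definition Qht :: "real^'p \<Rightarrow> real^'p" where
  "Qht z = (\<Sum>i\<in>{1..CARD('p)}. (\<sigma>h i * (gh i \<bullet> z)) *\<^sub>R hh i)"

lemma Qmul: "Q *v z = (\<Sum>i\<in>{1..r}. (\<sigma> i * (h i \<bullet> z)) *\<^sub>R g i)"
  by (simp add: svd_Q sum_outer_mult)
lemma Qhmul: "Qh *v z = (\<Sum>i\<in>{1..CARD('p)}. (\<sigma>h i * (hh i \<bullet> z)) *\<^sub>R gh i)"
  by (simp add: svd_Qh sum_outer_mult)

lemma Qt_inner: "Qt y \<bullet> z = y \<bullet> (Q *v z)"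
  by (simp add: Qt_def Qmul inner_sum_left inner_sum_right inner_commute mult_ac)
lemma Qht_inner: "Qht y \<bullet> z = y \<bullet> (Qh *v z)"
  by (simp add: Qht_def Qhmul inner_sum_left inner_sum_right inner_commute mult_ac)

lemma eps_nonneg: "0 \<le> \<epsilon>"
  unfolding spec_norm_def by (rule onorm_pos_le[OF matrix_vector_mul_bounded_linear])

lemma Enorm: "norm (E *v x) \<le> \<epsilon> * norm x"
  unfolding spec_norm_def by (rule onorm[OF matrix_vector_mul_bounded_linear])

lemma Emul: "E *v x = Qh *v x - Q *v x"
  by (simp add: matrix_vector_mult_diff_rdistrib)

lemma Etnorm: "norm (Qht y - Qt y) \<le> \<epsilon> * norm y"
proof -
  let ?w = "Qht y - Qt y"
  have "(norm ?w)\<^sup>2 = ?w \<bullet> ?w" by (simp add: power2_norm_eq_inner)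
  also have "\<dots> = y \<bullet> (E *v ?w)"
    by (simp add: inner_diff_left Qt_inner Qht_inner Emul inner_diff_right matrix_vector_mult_diff_distrib)
  also have "\<dots> \<le> norm y * norm (E *v ?w)" by (rule norm_cauchy_schwarz)
  also have "\<dots> \<le> norm y * (\<epsilon> * norm ?w)" by (simp add: Enorm mult_left_mono)
  finally have "(norm ?w)\<^sup>2 \<le> (\<epsilon> * norm y) * norm ?w" by (simp add: mult_ac)
  moreover have "0 \<le> \<epsilon> * norm y" using eps_nonneg by simp
  ultimately show ?thesis
    using norm_ge_zero[of ?w] sq_le_lin by blast
qed

lemma r_le_N: "r \<le> CARD('p)"
proof -
  have inj: "inj_on h {1..r}"
    using h_on unfolding orthonormal_on_def inj_on_def by (metis one_neq_zero)
  have "pairwise orthogonal (h ` {1..r})"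
    using h_on unfolding orthonormal_on_def pairwise_def orthogonal_def by force
  moreover have "0 \<notin> h ` {1..r}"
    using h_on unfolding orthonormal_on_def by force
  ultimately have "independent (h ` {1..r})" by (rule pairwise_orthogonal_independent)
  then have "card (h ` {1..r}) \<le> DIM(real^'p)" by (rule independent_card_le)
  then show ?thesis using card_image[OF inj] by simp
qed

lemma t_le_N: "t \<le> CARD('p)" using r_le_N st by simp

lemma Delta_le: "\<Delta> \<le> \<sigma> t"
  using st unfolding gapDelta_def Let_def by auto

lemma gap_below: "i \<in> {1..r} \<Longrightarrow> t < i \<Longrightarrow> \<sigma> i \<le> \<sigma> t - \<Delta>"
proof -
  assume i: "i \<in> {1..r}" "t < i"
  then have "t + 1 \<le> r" by simp
  then have "\<sigma> i \<le> \<sigma> (t+1)" using sig_mono i by auto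
  moreover have "\<Delta> \<le> \<sigma> t - \<sigma> (t+1)"
    using st \<open>t+1 \<le> r\<close> unfolding gapDelta_def Let_def by auto
  ultimately show ?thesis by simp
qed

lemma gap_above: "i \<in> {1..r} \<Longrightarrow> i < s \<Longrightarrow> \<sigma> s + \<Delta> \<le> \<sigma> i"
proof -
  assume i: "i \<in> {1..r}" "i < s"
  then have s1: "s \<noteq> 1" "s - 1 \<ge> 1" "s - 1 \<noteq> r + 1" using st by auto
  then have "\<sigma> (s - 1) \<le> \<sigma> i" using sig_mono i st by auto
  moreover have "\<Delta> \<le> \<sigma> (s-1) - \<sigma> s"
    using st s1 unfolding gapDelta_def Let_def by auto
  ultimately show ?thesis by simp
qed

end


lemma lin_proj: "linear (\<lambda>x. \<Sum>i\<in>A. (a i \<bullet> x) *\<^sub>R (a i :: real^'n))"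
  by (rule linearI) (simp_all add: inner_add_right scaleR_add_left sum.distrib scaleR_sum_right)

lemma on_indep:
  assumes "orthonormal_on A a"
  shows "independent (a ` A)" "inj_on a A"
proof -
  show inj: "inj_on a A"
    using assms unfolding orthonormal_on_def inj_on_def by (metis one_neq_zero)
  have "pairwise orthogonal (a ` A)"
    using assms unfolding orthonormal_on_def pairwise_def orthogonal_def by force
  moreover have "0 \<notin> a ` A"
    using assms unfolding orthonormal_on_def by force
  ultimately show "independent (a ` A)" by (rule pairwise_orthogonal_independent)
qed

lemma on_outside:
  assumes "orthonormal_on I v" "J \<subseteq> I" "finite J" "i \<in> I" "i \<notin> J"
  shows "v i \<bullet> (\<Sum>j\<in>J. c j *\<^sub>R v j) = 0"
proof -
  have "v i \<bullet> (\<Sum>j\<in>J. c j *\<^sub>R v j) = (\<Sum>j\<in>J. c j * (v i \<bullet> v j))"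
    by (simp add: inner_sum_right)
  also have "\<dots> = 0"
  proof (rule sum.neutral, rule ballI)
    fix j assume "j \<in> J"
    then have "v i \<bullet> v j = 0" using assms unfolding orthonormal_on_def by (metis subsetD)
    then show "c j * (v i \<bullet> v j) = 0" by simp
  qed
  finally show ?thesis .
qed

lemma span_fixed:
  fixes a :: "nat \<Rightarrow> real^'n" and x :: "real^'n"
  assumes "orthonormal_on A a" "finite A" "x \<in> span (a ` A)"
  shows "(\<Sum>i\<in>A. (a i \<bullet> x) *\<^sub>R a i) = x"
proof -
  let ?P = "\<lambda>x. \<Sum>i\<in>A. (a i \<bullet> x) *\<^sub>R a i"
  have lin: "linear ?P" by (rule lin_proj)
  have "linear (\<lambda>x. ?P x - x)" by (rule linear_compose_sub[OF lin linear_id[unfolded id_def]])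
  then have "subspace {x. ?P x - x = 0}" by (rule linear_subspace_kernel)
  then have "subspace {x. ?P x = x}" by simp
  moreover have "a ` A \<subseteq> {x. ?P x = x}"
  proof
    fix y assume "y \<in> a ` A"
    then obtain k where k: "k \<in> A" "y = a k" by auto
    have "?P (a k) = (\<Sum>i\<in>A. (if i = k then a i else 0))"
      by (rule sum.cong) (use assms(1) k in \<open>auto simp: orthonormal_on_def\<close>)
    also have "\<dots> = a k" using k assms(2) by (simp add: sum.delta')
    finally show "y \<in> {x. ?P x = x}" using k by simp
  qed
  ultimately have "span (a ` A) \<subseteq> {x. ?P x = x}" by (rule span_minimal[rotated])
  then show ?thesis using assms(3) by auto
qed

lemma exists_orth_vec:
  fixes a b :: "nat \<Rightarrow> real^'n"
  assumes a: "orthonormal_on A a" "finite A" and b: "orthonormal_on B b" "finite B"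
    and c: "card B < card A"
  shows "\<exists>x. x \<noteq> 0 \<and> (\<Sum>i\<in>A. (a i \<bullet> x) *\<^sub>R a i) = x \<and> (\<forall>i\<in>B. b i \<bullet> x = 0)"
proof (rule ccontr)
  assume nex: "\<not> ?thesis"
  let ?phi = "\<lambda>x. \<Sum>i\<in>B. (b i \<bullet> x) *\<^sub>R b i"
  have lin: "linear ?phi" by (rule lin_proj)
  have inj: "inj_on ?phi (span (a ` A))"
  proof (rule inj_onI)
    fix x y assume xy: "x \<in> span (a ` A)" "y \<in> span (a ` A)" "?phi x = ?phi y"
    let ?z = "x - y"
    have zs: "?z \<in> span (a ` A)" using xy by (simp add: span_diff)
    have "?phi ?z = 0" using xy(3) linear_diff[OF lin] by simp
    then have "\<forall>i\<in>B. b i \<bullet> ?z = 0"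
      using on_sum_inner[OF b] by (metis inner_zero_right)
    moreover have "(\<Sum>i\<in>A. (a i \<bullet> ?z) *\<^sub>R a i) = ?z" by (rule span_fixed[OF a zs])
    ultimately have "?z = 0" using nex by blast
    then show "x = y" by simp
  qed
  have "dim (?phi ` (a ` A)) = dim (a ` A)" by (rule dim_image_eq[OF lin inj])
  also have "\<dots> = card (a ` A)" by (rule dim_eq_card_independent[OF on_indep(1)[OF a(1)]])
  also have "\<dots> = card A" by (rule card_image[OF on_indep(2)[OF a(1)]])
  finally have d1: "dim (?phi ` (a ` A)) = card A" .
  have "?phi ` (a ` A) \<subseteq> span (b ` B)"
  proof (rule image_subsetI, rule span_sum)
    fix x i assume "i \<in> B"
    then show "(b i \<bullet> x) *\<^sub>R b i \<in> span (b ` B)" by (simp add: span_base span_scale)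
  qed
  then have "dim (?phi ` (a ` A)) \<le> card (b ` B)" by (rule dim_le_card) (use b in simp)
  also have "\<dots> \<le> card B" using b by (simp add: card_image_le)
  finally show False using d1 c by simp
qed

lemma sum_sq_le:
  fixes f x :: "nat \<Rightarrow> real"
  assumes "finite I" "\<And>i. i \<in> I \<Longrightarrow> (f i)\<^sup>2 \<le> c * (x i)\<^sup>2"
  shows "(\<Sum>i\<in>I. (f i)\<^sup>2) \<le> c * (\<Sum>i\<in>I. (x i)\<^sup>2)"
proof -
  have "(\<Sum>i\<in>I. (f i)\<^sup>2) \<le> (\<Sum>i\<in>I. c * (x i)\<^sup>2)" by (rule sum_mono) (use assms in auto)
  then show ?thesis by (simp add: sum_distrib_left)
qed


context setting begin

lemma normQ2: "(norm (Q *v x))\<^sup>2 = (\<Sum>i\<in>{1..r}. (\<sigma> i * (h i \<bullet> x))\<^sup>2)"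
  unfolding Qmul by (rule on_norm2[OF g_on]) simp
lemma normQh2: "(norm (Qh *v x))\<^sup>2 = (\<Sum>i\<in>{1..CARD('p)}. (\<sigma>h i * (hh i \<bullet> x))\<^sup>2)"
  unfolding Qhmul by (rule on_norm2[OF gh_on]) simp

lemma weyl_low: "\<sigma> t - \<epsilon> \<le> \<sigma>h t"
proof -
  have hA: "orthonormal_on {1..t} h" using on_subset[OF h_on] st by auto
  have hhB: "orthonormal_on {1..t-1} hh" by (rule on_subset[OF hh_on]) (use t_le_N in auto)
  obtain x where x: "x \<noteq> 0" "(\<Sum>i\<in>{1..t}. (h i \<bullet> x) *\<^sub>R h i) = x" "\<forall>i\<in>{1..t-1}. hh i \<bullet> x = 0"
    using exists_orth_vec[OF hA _ hhB] st by auto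
  have nx: "(norm x)\<^sup>2 = (\<Sum>i\<in>{1..t}. (h i \<bullet> x)\<^sup>2)"
    using on_norm2[OF hA, of "\<lambda>i. h i \<bullet> x"] x(2) by simp
  have out: "h i \<bullet> x = 0" if "i \<in> {1..r}" "i \<notin> {1..t}" for i
    using on_outside[OF h_on, of "{1..t}" i "\<lambda>i. h i \<bullet> x"] that st x(2) by auto
  have "(norm (Q *v x))\<^sup>2 = (\<Sum>i\<in>{1..t}. (\<sigma> i * (h i \<bullet> x))\<^sup>2)"
    unfolding normQ2
    by (rule sum.mono_neutral_right) (use st out in auto)
  also have "\<dots> \<ge> (\<Sum>i\<in>{1..t}. (\<sigma> t * (h i \<bullet> x))\<^sup>2)"
  proof (rule sum_mono)
    fix i assume i: "i \<in> {1..t}"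
    then have iR: "i \<in> {1..r}" "t \<in> {1..r}" "i \<le> t" using st by auto
    then have "0 < \<sigma> t" "\<sigma> t \<le> \<sigma> i" using sig_pos sig_mono by (simp_all del: atLeastAtMost_iff)
    then show "(\<sigma> t * (h i \<bullet> x))\<^sup>2 \<le> (\<sigma> i * (h i \<bullet> x))\<^sup>2"
      by (simp add: power_mult_distrib mult_right_mono power_mono)
  qed
  finally have q1: "(\<sigma> t * norm x)\<^sup>2 \<le> (norm (Q *v x))\<^sup>2" using nx by (simp add: power_mult_distrib sum_distrib_left)
  have "(norm (Qh *v x))\<^sup>2 \<le> (\<sigma>h t)\<^sup>2 * (\<Sum>i\<in>{1..CARD('p)}. (hh i \<bullet> x)\<^sup>2)"
    unfolding normQh2
  proof (rule sum_sq_le)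
    fix i assume i: "i \<in> {1..CARD('p)}"
    show "(\<sigma>h i * (hh i \<bullet> x))\<^sup>2 \<le> (\<sigma>h t)\<^sup>2 * (hh i \<bullet> x)\<^sup>2"
    proof (cases "i < t")
      case True then show ?thesis using x(3) i by auto
    next
      case False
      have tN: "t \<in> {1..CARD('p)}" using st t_le_N by simp
      have "0 \<le> \<sigma>h i" using sigh_nonneg i by blast
      moreover have "\<sigma>h i \<le> \<sigma>h t" using sigh_mono i tN False by (simp del: atLeastAtMost_iff)
      ultimately have "0 \<le> \<sigma>h i" "\<sigma>h i \<le> \<sigma>h t" by auto
      then show ?thesis by (simp add: power_mult_distrib mult_right_mono power_mono)
    qed
  qed simp
  also have "\<dots> \<le> (\<sigma>h t)\<^sup>2 * (norm x)\<^sup>2"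
    by (rule mult_left_mono[OF on_bessel[OF hh_on]]) simp_all
  finally have c1: "(norm (Qh *v x))\<^sup>2 \<le> (\<sigma>h t * norm x)\<^sup>2" by (simp only: power_mult_distrib)
  have "t \<in> {1..CARD('p)}" using st t_le_N by simp
  then have "0 \<le> \<sigma>h t" using sigh_nonneg by blast
  then have c2: "0 \<le> \<sigma>h t * norm x" by simp
  have q2: "norm (Qh *v x) \<le> \<sigma>h t * norm x" by (rule power2_le_imp_le[OF c1 c2])
  have q1': "\<sigma> t * norm x \<le> norm (Q *v x)"
    by (rule power2_le_imp_le[OF q1 norm_ge_zero])
  have qe: "Q *v x = Qh *v x - E *v x" by (simp add: Emul)
  have "norm (Q *v x) \<le> norm (Qh *v x) + norm (E *v x)" unfolding qe by (rule norm_triangle_ineq4)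
  then have "\<sigma> t * norm x \<le> \<sigma>h t * norm x + \<epsilon> * norm x" using q1' q2 Enorm[of x] by linarith
  then have "\<sigma> t * norm x \<le> (\<sigma>h t + \<epsilon>) * norm x" by (simp add: algebra_simps)
  then have "\<sigma> t \<le> \<sigma>h t + \<epsilon>" using x(1) by (simp add: mult_le_cancel_right)
  then show ?thesis by simp
qed

lemma weyl_up: "\<sigma>h s \<le> \<sigma> s + \<epsilon>"
proof -
  have hhA: "orthonormal_on {1..s} hh" using on_subset[OF hh_on] st t_le_N by auto
  have hB: "orthonormal_on {1..s-1} h" by (rule on_subset[OF h_on]) (use st in auto)
  obtain x where x: "x \<noteq> 0" "(\<Sum>i\<in>{1..s}. (hh i \<bullet> x) *\<^sub>R hh i) = x" "\<forall>i\<in>{1..s-1}. h i \<bullet> x = 0"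
    using exists_orth_vec[OF hhA _ hB] st by auto
  have nx: "(norm x)\<^sup>2 = (\<Sum>i\<in>{1..s}. (hh i \<bullet> x)\<^sup>2)"
    using on_norm2[OF hhA, of "\<lambda>i. hh i \<bullet> x"] x(2) by simp
  have out: "hh i \<bullet> x = 0" if "i \<in> {1..CARD('p)}" "i \<notin> {1..s}" for i
    using on_outside[OF hh_on, of "{1..s}" i "\<lambda>i. hh i \<bullet> x"] that st t_le_N x(2) by auto
  have "(norm (Qh *v x))\<^sup>2 = (\<Sum>i\<in>{1..s}. (\<sigma>h i * (hh i \<bullet> x))\<^sup>2)"
    unfolding normQh2
    by (rule sum.mono_neutral_right) (use st t_le_N out in auto)
  also have "\<dots> \<ge> (\<Sum>i\<in>{1..s}. (\<sigma>h s * (hh i \<bullet> x))\<^sup>2)"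
  proof (rule sum_mono)
    fix i assume i: "i \<in> {1..s}"
    then have "0 \<le> \<sigma>h s" "\<sigma>h s \<le> \<sigma>h i" using sigh_nonneg sigh_mono st t_le_N by auto
    then show "(\<sigma>h s * (hh i \<bullet> x))\<^sup>2 \<le> (\<sigma>h i * (hh i \<bullet> x))\<^sup>2"
      by (simp add: power_mult_distrib mult_right_mono power_mono)
  qed
  finally have q1: "(\<sigma>h s * norm x)\<^sup>2 \<le> (norm (Qh *v x))\<^sup>2"
    using nx by (simp add: power_mult_distrib sum_distrib_left)
  have "(norm (Q *v x))\<^sup>2 \<le> (\<sigma> s)\<^sup>2 * (\<Sum>i\<in>{1..r}. (h i \<bullet> x)\<^sup>2)"
    unfolding normQ2
  proof (rule sum_sq_le)
    fix i assume i: "i \<in> {1..r}"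
    show "(\<sigma> i * (h i \<bullet> x))\<^sup>2 \<le> (\<sigma> s)\<^sup>2 * (h i \<bullet> x)\<^sup>2"
    proof (cases "i < s")
      case True then show ?thesis using x(3) i by auto
    next
      case False
      then have "i \<in> {1..r}" "s \<in> {1..r}" "s \<le> i" using i st by auto
      then have "0 \<le> \<sigma> i" "\<sigma> i \<le> \<sigma> s" using sig_pos sig_mono by (auto simp del: atLeastAtMost_iff)
      then show ?thesis by (simp add: power_mult_distrib mult_right_mono power_mono)
    qed
  qed simp
  also have "\<dots> \<le> (\<sigma> s)\<^sup>2 * (norm x)\<^sup>2"
    by (rule mult_left_mono[OF on_bessel[OF h_on]]) simp_all
  finally have c1: "(norm (Q *v x))\<^sup>2 \<le> (\<sigma> s * norm x)\<^sup>2" by (simp only: power_mult_distrib)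
  have "s \<in> {1..r}" using st by simp
  then have "0 \<le> \<sigma> s" using sig_pos by (simp add: less_imp_le)
  then have c2: "0 \<le> \<sigma> s * norm x" by simp
  have q2: "norm (Q *v x) \<le> \<sigma> s * norm x" by (rule power2_le_imp_le[OF c1 c2])
  have q1': "\<sigma>h s * norm x \<le> norm (Qh *v x)"
    by (rule power2_le_imp_le[OF q1 norm_ge_zero])
  have qe: "Qh *v x = Q *v x + E *v x" by (simp add: Emul)
  have "norm (Qh *v x) \<le> norm (Q *v x) + norm (E *v x)" unfolding qe by (rule norm_triangle_ineq)
  then have "\<sigma>h s * norm x \<le> \<sigma> s * norm x + \<epsilon> * norm x" using q1' q2 Enorm[of x] by linarith
  then have "\<sigma>h s * norm x \<le> (\<sigma> s + \<epsilon>) * norm x" by (simp add: algebra_simps)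
  then have "\<sigma>h s \<le> \<sigma> s + \<epsilon>" using x(1) by (simp add: mult_le_cancel_right)
  then show ?thesis by simp
qed

end


lemma on_dist2:
  assumes "orthonormal_on I v" "finite I"
  shows "(norm (y - (\<Sum>i\<in>I. c i *\<^sub>R v i)))\<^sup>2 = (norm y)\<^sup>2 - 2 * (\<Sum>i\<in>I. c i * (v i \<bullet> y)) + (\<Sum>i\<in>I. (c i)\<^sup>2)"
proof -
  let ?p = "\<Sum>i\<in>I. c i *\<^sub>R v i"
  have "(norm (y - ?p))\<^sup>2 = (norm y)\<^sup>2 - 2 * (y \<bullet> ?p) + (norm ?p)\<^sup>2"
    by (simp add: power2_norm_eq_inner inner_diff_left inner_diff_right inner_commute)
  moreover have "y \<bullet> ?p = (\<Sum>i\<in>I. c i * (v i \<bullet> y))"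
    by (simp add: inner_sum_right inner_commute)
  ultimately show ?thesis using on_norm2[OF assms, of c] by simp
qed

lemma on_dist_ge:
  assumes "orthonormal_on I v" "finite I"
  shows "(norm (y - (\<Sum>i\<in>I. (v i \<bullet> y) *\<^sub>R v i)))\<^sup>2 \<le> (norm (y - (\<Sum>i\<in>I. c i *\<^sub>R v i)))\<^sup>2"
proof -
  have "(\<Sum>i\<in>I. (v i \<bullet> y) * (v i \<bullet> y)) - 2 * (\<Sum>i\<in>I. c i * (v i \<bullet> y)) + (\<Sum>i\<in>I. (c i)\<^sup>2)
      = (\<Sum>i\<in>I. (c i - v i \<bullet> y)\<^sup>2)"
    by (simp add: power2_eq_square algebra_simps sum.distrib sum_distrib_left sum_subtractf)
  moreover have "0 \<le> (\<Sum>i\<in>I. (c i - v i \<bullet> y)\<^sup>2)" by (simp add: sum_nonneg)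
  ultimately show ?thesis
    unfolding on_dist2[OF assms, of y c] on_dist2[OF assms, of y "\<lambda>i. v i \<bullet> y"]
    by (simp add: power2_eq_square)
qed

lemma on_dist_le:
  assumes "orthonormal_on I v" "finite I"
  shows "(norm (y - (\<Sum>i\<in>I. c i *\<^sub>R v i)))\<^sup>2 = (norm y)\<^sup>2 - 2 * (\<Sum>i\<in>I. c i * (v i \<bullet> y)) + (\<Sum>i\<in>I. (c i)\<^sup>2)"
  by (rule on_dist2[OF assms])

lemma pair_ineq:
  fixes a b \<sigma> \<gamma> k :: real
  assumes k: "0 \<le> k"
    and c: "(0 \<le> \<sigma> \<and> 0 \<le> \<gamma> \<and> k \<le> \<bar>\<sigma> - \<gamma>\<bar>) \<or> (a = - b \<and> k \<le> \<sigma> + \<gamma>)"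
  shows "k\<^sup>2 * (a\<^sup>2 + b\<^sup>2) \<le> (\<sigma> * b - \<gamma> * a)\<^sup>2 + (\<sigma> * a - \<gamma> * b)\<^sup>2"
  using c
proof
  assume h: "0 \<le> \<sigma> \<and> 0 \<le> \<gamma> \<and> k \<le> \<bar>\<sigma> - \<gamma>\<bar>"
  have e: "(\<sigma> * b - \<gamma> * a)\<^sup>2 + (\<sigma> * a - \<gamma> * b)\<^sup>2 = (\<sigma> - \<gamma>)\<^sup>2 * (a\<^sup>2 + b\<^sup>2) + 2 * (\<sigma> * \<gamma>) * (a - b)\<^sup>2"
    by (simp add: power2_eq_square algebra_simps)
  have "k\<^sup>2 \<le> (\<sigma> - \<gamma>)\<^sup>2" using h k by (metis abs_le_square_iff abs_of_nonneg)
  then have "k\<^sup>2 * (a\<^sup>2 + b\<^sup>2) \<le> (\<sigma> - \<gamma>)\<^sup>2 * (a\<^sup>2 + b\<^sup>2)" by (rule mult_right_mono) simp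
  moreover have "0 \<le> 2 * (\<sigma> * \<gamma>) * (a - b)\<^sup>2" using h by simp
  ultimately show ?thesis unfolding e by argo
next
  assume h: "a = - b \<and> k \<le> \<sigma> + \<gamma>"
  then have "k\<^sup>2 \<le> (\<sigma> + \<gamma>)\<^sup>2" using k by (simp add: power_mono)
  then have "k\<^sup>2 * (2 * b\<^sup>2) \<le> (\<sigma> + \<gamma>)\<^sup>2 * (2 * b\<^sup>2)" by (rule mult_right_mono) simp
  moreover have "(\<sigma> * b - \<gamma> * a)\<^sup>2 + (\<sigma> * a - \<gamma> * b)\<^sup>2 = (\<sigma> + \<gamma>)\<^sup>2 * (2 * b\<^sup>2)"
    using h by (simp add: power2_eq_square algebra_simps)
  ultimately show ?thesis using h by simp
qed

context setting begin

definition "\<gamma> = (\<sigma>h s + \<sigma>h t) / 2"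
definition "\<rho> = (\<sigma>h s - \<sigma>h t) / 2"
definition "\<delta> = \<Delta> - \<epsilon>"

lemma sN: "s \<in> {1..CARD('p)}" and tN': "t \<in> {1..CARD('p)}" using st t_le_N by auto

lemma sigh_S: "l \<in> S \<Longrightarrow> \<sigma>h t \<le> \<sigma>h l \<and> \<sigma>h l \<le> \<sigma>h s"
proof -
  assume l: "l \<in> S"
  then have lN: "l \<in> {1..CARD('p)}" using st t_le_N by auto
  have "\<forall>k\<in>{1..CARD('p)}. s \<le> k \<longrightarrow> \<sigma>h k \<le> \<sigma>h s" using sigh_mono sN by blast
  then have 1: "\<sigma>h l \<le> \<sigma>h s" using lN l by simp
  have "\<forall>k\<in>{1..CARD('p)}. l \<le> k \<longrightarrow> \<sigma>h k \<le> \<sigma>h l" using sigh_mono lN by blast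
  then have 2: "\<sigma>h t \<le> \<sigma>h l" using tN' l by simp
  show ?thesis using 1 2 by simp
qed

lemma rho_nonneg: "0 \<le> \<rho>" using sigh_S[of s] st unfolding \<rho>_def by simp

lemma delta_ge: "\<Delta> / 2 \<le> \<delta>" using pert unfolding \<delta>_def by simp

lemma delta_pos: "0 < \<delta>" using delta_ge Delta_pos by simp

lemma sight_ge: "\<Delta> - \<epsilon> \<le> \<sigma>h t" using weyl_low Delta_le by simp

lemma sight_pos: "\<Delta> / 2 \<le> \<sigma>h t" using sight_ge pert by simp

lemma sigh_S_pos: "l \<in> S \<Longrightarrow> \<Delta> / 2 \<le> \<sigma>h l" using sigh_S sight_pos by force

lemma gamma_ge: "\<rho> + \<delta> \<le> \<gamma>" using sight_ge unfolding \<gamma>_def \<rho>_def \<delta>_def by argo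

lemma lam_bound: "l \<in> S \<Longrightarrow> \<bar>\<sigma>h l - \<gamma>\<bar> \<le> \<rho>"
  using sigh_S[of l] unfolding \<gamma>_def \<rho>_def abs_le_iff by argo

lemma cond_i:
  assumes i: "i \<in> {1..r}" "i \<notin> S"
  shows "\<rho> + \<delta> \<le> \<bar>\<sigma> i - \<gamma>\<bar>"
proof (cases "i < s")
  case True
  have "\<sigma> s + \<Delta> \<le> \<sigma> i" using gap_above[OF i(1) True] .
  then have "\<rho> + \<delta> \<le> \<sigma> i - \<gamma>" using weyl_up unfolding \<gamma>_def \<rho>_def \<delta>_def by argo
  then show ?thesis by simp
next
  case False
  then have "t < i" using i by auto
  then have "\<sigma> i \<le> \<sigma> t - \<Delta>" using gap_below[OF i(1)] by simp
  then have "\<rho> + \<delta> \<le> \<gamma> - \<sigma> i" using weyl_low unfolding \<gamma>_def \<rho>_def \<delta>_def by argo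
  then show ?thesis by simp
qed

lemma lower_bound:
  assumes orth: "\<forall>i\<in>S. g i \<bullet> z1 + h i \<bullet> z2 = 0"
  shows "(\<rho> + \<delta>)\<^sup>2 * ((norm z1)\<^sup>2 + (norm z2)\<^sup>2)
           \<le> (norm (Q *v z2 - \<gamma> *\<^sub>R z1))\<^sup>2 + (norm (Qt z1 - \<gamma> *\<^sub>R z2))\<^sup>2"
proof -
  define a where "a i = g i \<bullet> z1" for i
  define b where "b i = h i \<bullet> z2" for i
  define x0 where "x0 = z1 - (\<Sum>i\<in>{1..r}. a i *\<^sub>R g i)"
  define y0 where "y0 = z2 - (\<Sum>i\<in>{1..r}. b i *\<^sub>R h i)"
  let ?k = "\<rho> + \<delta>"
  have k0: "0 \<le> ?k" using rho_nonneg delta_pos by simp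
  have g0: "0 \<le> \<gamma>" using gamma_ge k0 by simp
  have nz1: "(norm z1)\<^sup>2 = (\<Sum>i\<in>{1..r}. (a i)\<^sup>2) + (norm x0)\<^sup>2"
    using on_pyth[OF g_on, of z1] unfolding x0_def a_def by simp
  have nz2: "(norm z2)\<^sup>2 = (\<Sum>i\<in>{1..r}. (b i)\<^sup>2) + (norm y0)\<^sup>2"
    using on_pyth[OF h_on, of z2] unfolding y0_def b_def by simp
  have gx0: "g i \<bullet> x0 = 0" if "i \<in> {1..r}" for i
    unfolding x0_def a_def by (rule on_proj_orth[OF g_on _ that]) simp
  have hy0: "h i \<bullet> y0 = 0" if "i \<in> {1..r}" for i
    unfolding y0_def b_def by (rule on_proj_orth[OF h_on _ that]) simp
  have x0o: "orthogonal (\<Sum>i\<in>{1..r}. c i *\<^sub>R g i) (- \<gamma> *\<^sub>R x0)" for c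
    unfolding orthogonal_def inner_sum_left by (rule sum.neutral) (simp add: gx0)
  have y0o: "orthogonal (\<Sum>i\<in>{1..r}. c i *\<^sub>R h i) (- \<gamma> *\<^sub>R y0)" for c
    unfolding orthogonal_def inner_sum_left by (rule sum.neutral) (simp add: hy0)
  have e1: "Q *v z2 - \<gamma> *\<^sub>R z1 = (\<Sum>i\<in>{1..r}. (\<sigma> i * b i - \<gamma> * a i) *\<^sub>R g i) + (- \<gamma> *\<^sub>R x0)"
    unfolding Qmul x0_def b_def
    by (simp add: scaleR_diff_left sum_subtractf scaleR_sum_right sum_negf algebra_simps)
  have e2: "Qt z1 - \<gamma> *\<^sub>R z2 = (\<Sum>i\<in>{1..r}. (\<sigma> i * a i - \<gamma> * b i) *\<^sub>R h i) + (- \<gamma> *\<^sub>R y0)"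
    unfolding Qt_def y0_def a_def
    by (simp add: scaleR_diff_left sum_subtractf scaleR_sum_right sum_negf algebra_simps)
  have n1: "(norm (Q *v z2 - \<gamma> *\<^sub>R z1))\<^sup>2 = (\<Sum>i\<in>{1..r}. (\<sigma> i * b i - \<gamma> * a i)\<^sup>2) + \<gamma>\<^sup>2 * (norm x0)\<^sup>2"
    unfolding e1 norm_add_Pythagorean[OF x0o] on_norm2[OF g_on finite_atLeastAtMost]
    by (simp add: power_mult_distrib)
  have n2: "(norm (Qt z1 - \<gamma> *\<^sub>R z2))\<^sup>2 = (\<Sum>i\<in>{1..r}. (\<sigma> i * a i - \<gamma> * b i)\<^sup>2) + \<gamma>\<^sup>2 * (norm y0)\<^sup>2"
    unfolding e2 norm_add_Pythagorean[OF y0o] on_norm2[OF h_on finite_atLeastAtMost]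
    by (simp add: power_mult_distrib)
  have per: "?k\<^sup>2 * ((a i)\<^sup>2 + (b i)\<^sup>2) \<le> (\<sigma> i * b i - \<gamma> * a i)\<^sup>2 + (\<sigma> i * a i - \<gamma> * b i)\<^sup>2"
    if i: "i \<in> {1..r}" for i
  proof (rule pair_ineq[OF k0])
    show "(0 \<le> \<sigma> i \<and> 0 \<le> \<gamma> \<and> ?k \<le> \<bar>\<sigma> i - \<gamma>\<bar>) \<or> (a i = - b i \<and> ?k \<le> \<sigma> i + \<gamma>)"
    proof (cases "i \<in> S")
      case True
      then have "a i = - b i" using orth unfolding a_def b_def by (simp add: eq_neg_iff_add_eq_0)
      moreover have "0 < \<sigma> i" using sig_pos i by blast
      ultimately show ?thesis using gamma_ge by simp
    next
      case False
      have "0 < \<sigma> i" using sig_pos i by blast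
      then show ?thesis using cond_i[OF i False] g0 by simp
    qed
  qed
  have "?k\<^sup>2 * (\<Sum>i\<in>{1..r}. (a i)\<^sup>2 + (b i)\<^sup>2) \<le> (\<Sum>i\<in>{1..r}. (\<sigma> i * b i - \<gamma> * a i)\<^sup>2 + (\<sigma> i * a i - \<gamma> * b i)\<^sup>2)"
    unfolding sum_distrib_left by (rule sum_mono) (rule per, simp)
  moreover have "?k\<^sup>2 * ((norm x0)\<^sup>2 + (norm y0)\<^sup>2) \<le> \<gamma>\<^sup>2 * ((norm x0)\<^sup>2 + (norm y0)\<^sup>2)"
    by (rule mult_right_mono) (use gamma_ge k0 in \<open>simp_all add: power_mono\<close>)
  ultimately show ?thesis
    unfolding nz1 nz2 n1 n2 by (simp add: sum.distrib algebra_simps)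
qed

end


lemma scale_split: "((a - b) * c) *\<^sub>R (v::real^'n) + (b * c) *\<^sub>R v = (a * c) *\<^sub>R v"
  by (metis diff_add_cancel left_diff_distrib scaleR_add_left)

context setting begin

definition Uc where "Uc x = (\<Sum>m\<in>S. (hh m \<bullet> x) *\<^sub>R gh m)"
definition Vc where "Vc x = (\<Sum>m\<in>S. (hh m \<bullet> x) *\<^sub>R hh m)"
definition al where "al i x = (g i \<bullet> Uc x + h i \<bullet> Vc x) / 2"
definition Z where "Z x = (Uc x - (\<Sum>i\<in>S. al i x *\<^sub>R g i), Vc x - (\<Sum>i\<in>S. al i x *\<^sub>R h i))"
definition Lam where "Lam x = (\<Sum>m\<in>S. ((\<sigma>h m - \<gamma>) * (hh m \<bullet> x)) *\<^sub>R hh m)"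
definition Et where "Et y = Qht y - Qt y"
definition be where "be i x = (g i \<bullet> (E *v Vc x) + h i \<bullet> Et (Uc x)) / 2"

lemma SN: "S \<subseteq> {1..CARD('p)}" using st t_le_N by auto
lemma SR: "S \<subseteq> {1..r}" using st by auto
lemma hhS: "orthonormal_on S hh" by (rule on_subset[OF hh_on SN])
lemma ghS: "orthonormal_on S gh" by (rule on_subset[OF gh_on SN])
lemma hS: "orthonormal_on S h" by (rule on_subset[OF h_on SR])
lemma gS: "orthonormal_on S g" by (rule on_subset[OF g_on SR])

lemma hh_Vc_in: "m \<in> S \<Longrightarrow> hh m \<bullet> Vc x = hh m \<bullet> x"
  unfolding Vc_def by (rule on_sum_inner[OF hhS]) simp_all
lemma hh_Vc_out: "m \<in> {1..CARD('p)} \<Longrightarrow> m \<notin> S \<Longrightarrow> hh m \<bullet> Vc x = 0"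
  unfolding Vc_def by (rule on_outside[OF hh_on SN]) simp_all
lemma gh_Uc_in: "m \<in> S \<Longrightarrow> gh m \<bullet> Uc x = hh m \<bullet> x"
  unfolding Uc_def by (rule on_sum_inner[OF ghS]) simp_all
lemma gh_Uc_out: "m \<in> {1..CARD('p)} \<Longrightarrow> m \<notin> S \<Longrightarrow> gh m \<bullet> Uc x = 0"
  unfolding Uc_def by (rule on_outside[OF gh_on SN]) simp_all
lemma hh_Lam_in: "m \<in> S \<Longrightarrow> hh m \<bullet> Lam x = (\<sigma>h m - \<gamma>) * (hh m \<bullet> x)"
  unfolding Lam_def by (rule on_sum_inner[OF hhS]) simp_all

lemma Qh_Vc: "Qh *v Vc x = (\<Sum>m\<in>S. (\<sigma>h m * (hh m \<bullet> x)) *\<^sub>R gh m)"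
proof -
  have "Qh *v Vc x = (\<Sum>m\<in>{1..CARD('p)}. (\<sigma>h m * (hh m \<bullet> Vc x)) *\<^sub>R gh m)" by (rule Qhmul)
  also have "\<dots> = (\<Sum>m\<in>S. (\<sigma>h m * (hh m \<bullet> Vc x)) *\<^sub>R gh m)"
    by (rule sum.mono_neutral_right) (use SN hh_Vc_out in auto)
  also have "\<dots> = (\<Sum>m\<in>S. (\<sigma>h m * (hh m \<bullet> x)) *\<^sub>R gh m)"
    by (rule sum.cong) (simp_all add: hh_Vc_in)
  finally show ?thesis .
qed

lemma Qht_Uc: "Qht (Uc x) = (\<Sum>m\<in>S. (\<sigma>h m * (hh m \<bullet> x)) *\<^sub>R hh m)"
proof -
  have "Qht (Uc x) = (\<Sum>m\<in>{1..CARD('p)}. (\<sigma>h m * (gh m \<bullet> Uc x)) *\<^sub>R hh m)" by (rule Qht_def)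
  also have "\<dots> = (\<Sum>m\<in>S. (\<sigma>h m * (gh m \<bullet> Uc x)) *\<^sub>R hh m)"
    by (rule sum.mono_neutral_right) (use SN gh_Uc_out in auto)
  also have "\<dots> = (\<Sum>m\<in>S. (\<sigma>h m * (hh m \<bullet> x)) *\<^sub>R hh m)"
    by (rule sum.cong) (simp_all add: gh_Uc_in)
  finally show ?thesis .
qed

lemma Uc_Lam: "Uc (Lam x) = (\<Sum>m\<in>S. ((\<sigma>h m - \<gamma>) * (hh m \<bullet> x)) *\<^sub>R gh m)"
  unfolding Uc_def by (rule sum.cong) (simp_all add: hh_Lam_in)
lemma Vc_Lam: "Vc (Lam x) = Lam x"
  unfolding Vc_def Lam_def by (rule sum.cong) (simp_all add: hh_Lam_in[unfolded Lam_def])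


lemma Qh_Vc': "Qh *v Vc x = Uc (Lam x) + \<gamma> *\<^sub>R Uc x"
proof -
  have "Uc (Lam x) + \<gamma> *\<^sub>R Uc x = (\<Sum>m\<in>S. ((\<sigma>h m - \<gamma>) * (hh m \<bullet> x)) *\<^sub>R gh m + (\<gamma> * (hh m \<bullet> x)) *\<^sub>R gh m)"
    unfolding Uc_Lam by (simp add: Uc_def scaleR_sum_right sum.distrib)
  also have "\<dots> = (\<Sum>m\<in>S. (\<sigma>h m * (hh m \<bullet> x)) *\<^sub>R gh m)"
    by (rule sum.cong) (simp_all only: scale_split)
  finally show ?thesis by (simp add: Qh_Vc)
qed
lemma Qht_Uc': "Qht (Uc x) = Vc (Lam x) + \<gamma> *\<^sub>R Vc x"
proof -
  have "Vc (Lam x) + \<gamma> *\<^sub>R Vc x = (\<Sum>m\<in>S. ((\<sigma>h m - \<gamma>) * (hh m \<bullet> x)) *\<^sub>R hh m + (\<gamma> * (hh m \<bullet> x)) *\<^sub>R hh m)"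
    unfolding Vc_Lam by (simp add: Lam_def Vc_def scaleR_sum_right sum.distrib)
  also have "\<dots> = (\<Sum>m\<in>S. (\<sigma>h m * (hh m \<bullet> x)) *\<^sub>R hh m)"
    by (rule sum.cong) (simp_all only: scale_split)
  finally show ?thesis by (simp add: Qht_Uc)
qed

lemma Q_hS: "Q *v (\<Sum>i\<in>S. c i *\<^sub>R h i) = (\<Sum>i\<in>S. (\<sigma> i * c i) *\<^sub>R g i)"
proof -
  have "Q *v (\<Sum>i\<in>S. c i *\<^sub>R h i) = (\<Sum>k\<in>{1..r}. (\<sigma> k * (h k \<bullet> (\<Sum>i\<in>S. c i *\<^sub>R h i))) *\<^sub>R g k)"
    by (rule Qmul)
  also have "\<dots> = (\<Sum>k\<in>S. (\<sigma> k * (h k \<bullet> (\<Sum>i\<in>S. c i *\<^sub>R h i))) *\<^sub>R g k)"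
    by (rule sum.mono_neutral_right) (use SR on_outside[OF h_on SR] in auto)
  also have "\<dots> = (\<Sum>i\<in>S. (\<sigma> i * c i) *\<^sub>R g i)"
    by (rule sum.cong) (simp_all add: on_sum_inner[OF hS])
  finally show ?thesis .
qed

lemma Qt_gS: "Qt (\<Sum>i\<in>S. c i *\<^sub>R g i) = (\<Sum>i\<in>S. (\<sigma> i * c i) *\<^sub>R h i)"
proof -
  have "Qt (\<Sum>i\<in>S. c i *\<^sub>R g i) = (\<Sum>k\<in>{1..r}. (\<sigma> k * (g k \<bullet> (\<Sum>i\<in>S. c i *\<^sub>R g i))) *\<^sub>R h k)"
    by (rule Qt_def)
  also have "\<dots> = (\<Sum>k\<in>S. (\<sigma> k * (g k \<bullet> (\<Sum>i\<in>S. c i *\<^sub>R g i))) *\<^sub>R h k)"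
    by (rule sum.mono_neutral_right) (use SR on_outside[OF g_on SR] in auto)
  also have "\<dots> = (\<Sum>i\<in>S. (\<sigma> i * c i) *\<^sub>R h i)"
    by (rule sum.cong) (simp_all add: on_sum_inner[OF gS])
  finally show ?thesis .
qed

lemma g_Q: "i \<in> {1..r} \<Longrightarrow> g i \<bullet> (Q *v z) = \<sigma> i * (h i \<bullet> z)"
  unfolding Qmul by (rule on_sum_inner[OF g_on]) simp_all
lemma h_Qt: "i \<in> {1..r} \<Longrightarrow> h i \<bullet> Qt z = \<sigma> i * (g i \<bullet> z)"
  unfolding Qt_def by (rule on_sum_inner[OF h_on]) simp_all

lemma Qt_diff: "Qt (a - b) = Qt a - Qt b"
  unfolding Qt_def by (simp add: inner_diff_right algebra_simps scaleR_diff_left sum_subtractf)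

lemma al_Lam:
  assumes i: "i \<in> S"
  shows "al i (Lam x) = (\<sigma> i - \<gamma>) * al i x + be i x"
proof -
  have iR: "i \<in> {1..r}" using i SR by auto
  have "Uc (Lam x) = Qh *v Vc x - \<gamma> *\<^sub>R Uc x" using Qh_Vc' by simp
  also have "\<dots> = Q *v Vc x + E *v Vc x - \<gamma> *\<^sub>R Uc x" by (simp add: Emul)
  finally have 1: "g i \<bullet> Uc (Lam x) = \<sigma> i * (h i \<bullet> Vc x) + g i \<bullet> (E *v Vc x) - \<gamma> * (g i \<bullet> Uc x)"
    by (simp add: inner_diff_right inner_add_right g_Q[OF iR])
  have "Vc (Lam x) = Qht (Uc x) - \<gamma> *\<^sub>R Vc x" using Qht_Uc' by simp
  also have "\<dots> = Qt (Uc x) + Et (Uc x) - \<gamma> *\<^sub>R Vc x" by (simp add: Et_def)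
  finally have 2: "h i \<bullet> Vc (Lam x) = \<sigma> i * (g i \<bullet> Uc x) + h i \<bullet> Et (Uc x) - \<gamma> * (h i \<bullet> Vc x)"
    by (simp add: inner_diff_right inner_add_right h_Qt[OF iR])
  show ?thesis unfolding al_def be_def 1 2 by (simp add: field_simps)
qed

lemma ident1:
  "Q *v snd (Z x) - \<gamma> *\<^sub>R fst (Z x) = fst (Z (Lam x)) - (E *v Vc x - (\<Sum>i\<in>S. be i x *\<^sub>R g i))"
proof -
  have QV: "Q *v Vc x = Uc (Lam x) + \<gamma> *\<^sub>R Uc x - E *v Vc x"
    using Qh_Vc'[of x] by (simp add: Emul)
  have s1: "(\<Sum>i\<in>S. al i (Lam x) *\<^sub>R g i) = (\<Sum>i\<in>S. ((\<sigma> i - \<gamma>) * al i x + be i x) *\<^sub>R g i)"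
    by (rule sum.cong) (simp_all add: al_Lam)
  show ?thesis
    unfolding Z_def fst_conv snd_conv matrix_vector_mult_diff_distrib Q_hS QV s1
    by (simp add: algebra_simps scaleR_sum_right sum.distrib sum_subtractf)
qed

lemma ident2:
  "Qt (fst (Z x)) - \<gamma> *\<^sub>R snd (Z x) = snd (Z (Lam x)) - (Et (Uc x) - (\<Sum>i\<in>S. be i x *\<^sub>R h i))"
proof -
  have QU: "Qt (Uc x) = Vc (Lam x) + \<gamma> *\<^sub>R Vc x - Et (Uc x)"
    using Qht_Uc'[of x] by (simp add: Et_def)
  have s1: "(\<Sum>i\<in>S. al i (Lam x) *\<^sub>R h i) = (\<Sum>i\<in>S. ((\<sigma> i - \<gamma>) * al i x + be i x) *\<^sub>R h i)"
    by (rule sum.cong) (simp_all add: al_Lam)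
  show ?thesis
    unfolding Z_def fst_conv snd_conv Qt_diff Qt_gS QU s1
    by (simp add: algebra_simps scaleR_sum_right sum.distrib sum_subtractf)
qed

end


lemma norm_prod_sq: "(norm (p :: 'a::real_normed_vector \<times> 'b::real_normed_vector))\<^sup>2 = (norm (fst p))\<^sup>2 + (norm (snd p))\<^sup>2"
  unfolding norm_prod_def by simp

lemma half_sq: "((a::real) + b) / 2 * a + (a + b) / 2 * b = 2 * ((a + b) / 2)\<^sup>2"
  by (simp add: power2_eq_square field_simps)

context setting begin

lemma Uc_add: "Uc (x + y) = Uc x + Uc y" unfolding Uc_def by (simp add: inner_add_right scaleR_add_left sum.distrib)
lemma Uc_scale: "Uc (c *\<^sub>R x) = c *\<^sub>R Uc x" unfolding Uc_def by (simp add: scaleR_sum_right)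
lemma Vc_add: "Vc (x + y) = Vc x + Vc y" unfolding Vc_def by (simp add: inner_add_right scaleR_add_left sum.distrib)
lemma Vc_scale: "Vc (c *\<^sub>R x) = c *\<^sub>R Vc x" unfolding Vc_def by (simp add: scaleR_sum_right)
lemma al_add: "al i (x + y) = al i x + al i y" unfolding al_def by (simp add: Uc_add Vc_add inner_add_right add_divide_distrib)
lemma al_scale: "al i (c *\<^sub>R x) = c * al i x" unfolding al_def by (simp add: Uc_scale Vc_scale algebra_simps)

lemma Z_linear: "linear Z"
proof (rule linearI)
  fix x y show "Z (x + y) = Z x + Z y"
    unfolding Z_def by (simp add: Uc_add Vc_add al_add scaleR_add_left sum.distrib)
next
  fix c x show "Z (c *\<^sub>R x) = c *\<^sub>R Z x"
    unfolding Z_def by (simp add: Uc_scale Vc_scale al_scale scaleR_sum_right scaleR_diff_right)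
qed

lemma Z_bl: "bounded_linear Z" using Z_linear linear_conv_bounded_linear by auto

lemma nUc: "(norm (Uc x))\<^sup>2 \<le> (norm x)\<^sup>2"
  unfolding Uc_def on_norm2[OF ghS finite_atLeastAtMost] by (rule on_bessel[OF hhS]) simp
lemma nVc: "(norm (Vc x))\<^sup>2 \<le> (norm x)\<^sup>2"
  unfolding Vc_def on_norm2[OF hhS finite_atLeastAtMost] by (rule on_bessel[OF hhS]) simp
lemma nUc1: "norm (Uc x) \<le> norm x" using nUc by (rule power2_le_imp_le) simp
lemma nVc1: "norm (Vc x) \<le> norm x" using nVc by (rule power2_le_imp_le) simp

lemma nLam: "norm (Lam x) \<le> \<rho> * norm x"
proof -
  have "(norm (Lam x))\<^sup>2 = (\<Sum>m\<in>S. ((\<sigma>h m - \<gamma>) * (hh m \<bullet> x))\<^sup>2)"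
    unfolding Lam_def by (rule on_norm2[OF hhS]) simp
  also have "\<dots> \<le> \<rho>\<^sup>2 * (\<Sum>m\<in>S. (hh m \<bullet> x)\<^sup>2)"
  proof (rule sum_sq_le)
    fix m assume m: "m \<in> S"
    have "(\<sigma>h m - \<gamma>)\<^sup>2 \<le> \<rho>\<^sup>2" using lam_bound[OF m] by (metis abs_le_square_iff abs_of_nonneg rho_nonneg)
    then show "((\<sigma>h m - \<gamma>) * (hh m \<bullet> x))\<^sup>2 \<le> \<rho>\<^sup>2 * (hh m \<bullet> x)\<^sup>2"
      unfolding power_mult_distrib by (rule mult_right_mono) simp
  qed simp
  also have "\<dots> \<le> \<rho>\<^sup>2 * (norm x)\<^sup>2" by (rule mult_left_mono[OF on_bessel[OF hhS]]) simp_all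
  finally have c1: "(norm (Lam x))\<^sup>2 \<le> (\<rho> * norm x)\<^sup>2" by (simp only: power_mult_distrib)
  have c2: "0 \<le> \<rho> * norm x" using rho_nonneg by simp
  show ?thesis by (rule power2_le_imp_le[OF c1 c2])
qed

definition "Rv x = (E *v Vc x - (\<Sum>i\<in>S. be i x *\<^sub>R g i), Et (Uc x) - (\<Sum>i\<in>S. be i x *\<^sub>R h i))"

lemma nRv: "norm (Rv x) \<le> sqrt 2 * \<epsilon> * norm x"
proof -
  let ?r1 = "E *v Vc x" and ?r2 = "Et (Uc x)"
  have d1: "(norm (?r1 - (\<Sum>i\<in>S. be i x *\<^sub>R g i)))\<^sup>2 = (norm ?r1)\<^sup>2 - 2 * (\<Sum>i\<in>S. be i x * (g i \<bullet> ?r1)) + (\<Sum>i\<in>S. (be i x)\<^sup>2)"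
    by (rule on_dist2[OF gS]) simp
  have d2: "(norm (?r2 - (\<Sum>i\<in>S. be i x *\<^sub>R h i)))\<^sup>2 = (norm ?r2)\<^sup>2 - 2 * (\<Sum>i\<in>S. be i x * (h i \<bullet> ?r2)) + (\<Sum>i\<in>S. (be i x)\<^sup>2)"
    by (rule on_dist2[OF hS]) simp
  have AB0: "(\<Sum>i\<in>S. be i x * (g i \<bullet> ?r1)) + (\<Sum>i\<in>S. be i x * (h i \<bullet> ?r2)) = (\<Sum>i\<in>S. 2 * (be i x)\<^sup>2)"
    unfolding sum.distrib[symmetric] by (rule sum.cong) (simp_all only: be_def half_sq)
  have AB: "(\<Sum>i\<in>S. be i x * (g i \<bullet> ?r1)) + (\<Sum>i\<in>S. be i x * (h i \<bullet> ?r2)) = 2 * (\<Sum>i\<in>S. (be i x)\<^sup>2)"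
    unfolding AB0 by (simp only: sum_distrib_left)
  have "(norm (Rv x))\<^sup>2 = ((norm ?r1)\<^sup>2 - 2 * (\<Sum>i\<in>S. be i x * (g i \<bullet> ?r1)) + (\<Sum>i\<in>S. (be i x)\<^sup>2))
     + ((norm ?r2)\<^sup>2 - 2 * (\<Sum>i\<in>S. be i x * (h i \<bullet> ?r2)) + (\<Sum>i\<in>S. (be i x)\<^sup>2))"
    by (simp only: norm_prod_sq Rv_def fst_conv snd_conv d1 d2)
  also have "\<dots> = (norm ?r1)\<^sup>2 + (norm ?r2)\<^sup>2 - 2 * (\<Sum>i\<in>S. (be i x)\<^sup>2)"
    using AB by argo
  also have "\<dots> \<le> (norm ?r1)\<^sup>2 + (norm ?r2)\<^sup>2" by (simp add: sum_nonneg)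
  also have "\<dots> \<le> (\<epsilon> * norm x)\<^sup>2 + (\<epsilon> * norm x)\<^sup>2"
  proof (rule add_mono)
    have "norm ?r1 \<le> \<epsilon> * norm (Vc x)" by (rule Enorm)
    also have "\<dots> \<le> \<epsilon> * norm x" by (rule mult_left_mono[OF nVc1 eps_nonneg])
    finally show "(norm ?r1)\<^sup>2 \<le> (\<epsilon> * norm x)\<^sup>2" by (rule power_mono) simp
    have "norm ?r2 \<le> \<epsilon> * norm (Uc x)" unfolding Et_def by (rule Etnorm)
    also have "\<dots> \<le> \<epsilon> * norm x" by (rule mult_left_mono[OF nUc1 eps_nonneg])
    finally show "(norm ?r2)\<^sup>2 \<le> (\<epsilon> * norm x)\<^sup>2" by (rule power_mono) simp
  qed
  also have "\<dots> = (sqrt 2 * \<epsilon> * norm x)\<^sup>2" by (simp add: power_mult_distrib)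
  finally have c1: "(norm (Rv x))\<^sup>2 \<le> (sqrt 2 * \<epsilon> * norm x)\<^sup>2" .
  have c2: "0 \<le> sqrt 2 * \<epsilon> * norm x" using eps_nonneg by simp
  show ?thesis by (rule power2_le_imp_le[OF c1 c2])
qed

lemma Z_orth: "\<forall>i\<in>S. g i \<bullet> fst (Z x) + h i \<bullet> snd (Z x) = 0"
proof
  fix i assume i: "i \<in> S"
  have "g i \<bullet> fst (Z x) = g i \<bullet> Uc x - al i x"
    unfolding Z_def fst_conv inner_diff_right using on_sum_inner[OF gS _ i] by simp
  moreover have "h i \<bullet> snd (Z x) = h i \<bullet> Vc x - al i x"
    unfolding Z_def snd_conv inner_diff_right using on_sum_inner[OF hS _ i] by simp
  ultimately show "g i \<bullet> fst (Z x) + h i \<bullet> snd (Z x) = 0" unfolding al_def by simp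
qed

lemma DK_step: "(\<rho> + \<delta>) * norm (Z x) \<le> norm (Z (Lam x)) + sqrt 2 * \<epsilon> * norm x"
proof -
  let ?W = "(Q *v snd (Z x) - \<gamma> *\<^sub>R fst (Z x), Qt (fst (Z x)) - \<gamma> *\<^sub>R snd (Z x))"
  have W: "?W = Z (Lam x) - Rv x"
    unfolding ident1 ident2 Rv_def by (simp add: prod_eq_iff)
  have "(\<rho> + \<delta>)\<^sup>2 * ((norm (fst (Z x)))\<^sup>2 + (norm (snd (Z x)))\<^sup>2) \<le> (norm (fst ?W))\<^sup>2 + (norm (snd ?W))\<^sup>2"
    unfolding fst_conv snd_conv by (rule lower_bound[OF Z_orth])
  then have c1: "((\<rho> + \<delta>) * norm (Z x))\<^sup>2 \<le> (norm ?W)\<^sup>2"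
    unfolding power_mult_distrib norm_prod_sq[of "Z x"] norm_prod_sq[of ?W] .
  have "(\<rho> + \<delta>) * norm (Z x) \<le> norm ?W" by (rule power2_le_imp_le[OF c1 norm_ge_zero])
  also have "\<dots> \<le> norm (Z (Lam x)) + norm (Rv x)" unfolding W by (rule norm_triangle_ineq4)
  also have "\<dots> \<le> norm (Z (Lam x)) + sqrt 2 * \<epsilon> * norm x" using nRv by simp
  finally show ?thesis .
qed

lemma DK: "onorm Z \<le> sqrt 2 * \<epsilon> / \<delta>"
proof -
  let ?K = "onorm Z"
  have K0: "0 \<le> ?K" by (rule onorm_pos_le[OF Z_bl])
  have kd: "0 < \<rho> + \<delta>" using rho_nonneg delta_pos by simp
  have "norm (Z x) \<le> ((?K * \<rho> + sqrt 2 * \<epsilon>) / (\<rho> + \<delta>)) * norm x" for x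
  proof -
    have "norm (Z (Lam x)) \<le> ?K * norm (Lam x)" by (rule onorm[OF Z_bl])
    also have "\<dots> \<le> ?K * (\<rho> * norm x)" by (rule mult_left_mono[OF nLam K0])
    finally have "(\<rho> + \<delta>) * norm (Z x) \<le> (?K * \<rho> + sqrt 2 * \<epsilon>) * norm x"
      using DK_step[of x] by (simp add: algebra_simps)
    then show ?thesis using kd by (simp add: field_simps)
  qed
  then have "?K \<le> (?K * \<rho> + sqrt 2 * \<epsilon>) / (\<rho> + \<delta>)" by (rule onorm_le)
  then have "?K * (\<rho> + \<delta>) \<le> ?K * \<rho> + sqrt 2 * \<epsilon>" using kd by (simp add: field_simps)
  then have "?K * \<delta> \<le> sqrt 2 * \<epsilon>" by (simp add: algebra_simps)
  then show ?thesis using delta_pos by (simp add: field_simps)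
qed

lemma Znorm: "norm (Z x) \<le> sqrt 2 * \<epsilon> / \<delta> * norm x"
proof -
  have "norm (Z x) \<le> onorm Z * norm x" by (rule onorm[OF Z_bl])
  also have "\<dots> \<le> sqrt 2 * \<epsilon> / \<delta> * norm x" by (rule mult_right_mono[OF DK norm_ge_zero])
  finally show ?thesis .
qed

lemma sinR: "norm (Vc x - (\<Sum>i\<in>S. (h i \<bullet> Vc x) *\<^sub>R h i)) \<le> sqrt 2 * \<epsilon> / \<delta> * norm x"
proof -
  have "(norm (Vc x - (\<Sum>i\<in>S. (h i \<bullet> Vc x) *\<^sub>R h i)))\<^sup>2 \<le> (norm (Vc x - (\<Sum>i\<in>S. al i x *\<^sub>R h i)))\<^sup>2"
    by (rule on_dist_ge[OF hS]) simp
  also have "\<dots> = (norm (snd (Z x)))\<^sup>2" unfolding Z_def by simp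
  also have "\<dots> \<le> (norm (Z x))\<^sup>2" unfolding norm_prod_sq[of "Z x"] by simp
  also have "\<dots> \<le> (sqrt 2 * \<epsilon> / \<delta> * norm x)\<^sup>2" by (rule power_mono[OF Znorm norm_ge_zero])
  finally have c1: "(norm (Vc x - (\<Sum>i\<in>S. (h i \<bullet> Vc x) *\<^sub>R h i)))\<^sup>2 \<le> (sqrt 2 * \<epsilon> / \<delta> * norm x)\<^sup>2" .
  have c2: "0 \<le> sqrt 2 * \<epsilon> / \<delta> * norm x" using eps_nonneg delta_pos by simp
  show ?thesis by (rule power2_le_imp_le[OF c1 c2])
qed

lemma sinG: "norm (Uc x - (\<Sum>i\<in>S. (g i \<bullet> Uc x) *\<^sub>R g i)) \<le> sqrt 2 * \<epsilon> / \<delta> * norm x"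
proof -
  have "(norm (Uc x - (\<Sum>i\<in>S. (g i \<bullet> Uc x) *\<^sub>R g i)))\<^sup>2 \<le> (norm (Uc x - (\<Sum>i\<in>S. al i x *\<^sub>R g i)))\<^sup>2"
    by (rule on_dist_ge[OF gS]) simp
  also have "\<dots> = (norm (fst (Z x)))\<^sup>2" unfolding Z_def by simp
  also have "\<dots> \<le> (norm (Z x))\<^sup>2" unfolding norm_prod_sq[of "Z x"] by simp
  also have "\<dots> \<le> (sqrt 2 * \<epsilon> / \<delta> * norm x)\<^sup>2" by (rule power_mono[OF Znorm norm_ge_zero])
  finally have c1: "(norm (Uc x - (\<Sum>i\<in>S. (g i \<bullet> Uc x) *\<^sub>R g i)))\<^sup>2 \<le> (sqrt 2 * \<epsilon> / \<delta> * norm x)\<^sup>2" .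
  have c2: "0 \<le> sqrt 2 * \<epsilon> / \<delta> * norm x" using eps_nonneg delta_pos by simp
  show ?thesis by (rule power2_le_imp_le[OF c1 c2])
qed

end


lemma mv_linear_in_matrix: "linear (\<lambda>L::real^'n^'m. L *v v)"
  by (rule linearI) (simp_all add: matrix_vector_mult_add_rdistrib scaleR_matrix_vector_assoc)

lemma mv_cont: "continuous_on UNIV (\<lambda>L::real^'n^'m. L *v v)"
  by (rule linear_continuous_on, subst linear_conv_bounded_linear[symmetric], rule mv_linear_in_matrix)

lemma matrix_norm_le:
  fixes L :: "real^'n^'m"
  assumes "\<And>i j. \<bar>L $ i $ j\<bar> \<le> 1"
  shows "norm L \<le> real CARD('m) * real CARD('n)"
proof -
  have "norm L \<le> (\<Sum>i\<in>UNIV. norm (L $ i))"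
    unfolding norm_vec_def by (rule L2_set_le_sum) simp
  also have "\<dots> \<le> (\<Sum>i\<in>(UNIV::'m set). real CARD('n))"
  proof (rule sum_mono)
    fix i
    have "norm (L $ i) \<le> (\<Sum>j\<in>UNIV. \<bar>L $ i $ j\<bar>)" by (rule norm_le_l1_cart)
    also have "\<dots> \<le> (\<Sum>j\<in>(UNIV::'n set). 1)" by (rule sum_mono) (rule assms)
    finally show "norm (L $ i) \<le> real CARD('n)" by simp
  qed
  finally show ?thesis by simp
qed

lemma sum_delta_vec:
  assumes "orthonormal_on I v" "finite I" "k \<in> I"
  shows "(\<Sum>i\<in>I. (v i \<bullet> v k) *\<^sub>R w i) = (w k :: real^'n)"
proof -
  have "(\<Sum>i\<in>I. (v i \<bullet> v k) *\<^sub>R w i) = (\<Sum>i\<in>I. if i = k then w i else 0)"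
    by (rule sum.cong) (use assms in \<open>auto simp: orthonormal_on_def\<close>)
  also have "\<dots> = w k" using assms by (simp add: sum.delta')
  finally show ?thesis .
qed

context setting begin

definition Ph where "Ph x = (\<Sum>l\<in>S. (h l \<bullet> x) *\<^sub>R h l)"

definition KK :: "(real^'p^'p) set" where
  "KK = {L. (\<forall>x. L *v x = L *v Ph x) \<and>
            (\<forall>l\<in>S. \<forall>l'\<in>S. (L *v h l) \<bullet> (L *v h l') = (if l = l' then 1 else 0)) \<and>
            (\<forall>l\<in>S. Vc (L *v h l) = L *v h l)}"

definition ff :: "real^'p^'p \<Rightarrow> real" where
  "ff L = (\<Sum>l\<in>S. h l \<bullet> (L *v h l))"

lemma Vc_linear: "linear Vc"
  by (rule linearI) (simp_all add: Vc_add Vc_scale)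
lemma Vc_cont: "continuous_on UNIV Vc"
  by (rule linear_continuous_on, subst linear_conv_bounded_linear[symmetric], rule Vc_linear)
lemma Ph_hS: "l \<in> S \<Longrightarrow> h l \<bullet> Ph x = h l \<bullet> x"
  unfolding Ph_def by (rule on_sum_inner[OF hS]) simp_all

lemma KK_closed: "closed KK"
proof -
  have "KK = (\<Inter>x. {L. L *v x = L *v Ph x}) \<inter>
             (\<Inter>l\<in>S. \<Inter>l'\<in>S. {L. (L *v h l) \<bullet> (L *v h l') = (if l = l' then 1 else 0)}) \<inter>
             (\<Inter>l\<in>S. {L. Vc (L *v h l) = L *v h l})"
    unfolding KK_def by auto
  moreover have "closed (\<Inter>x. {L::real^'p^'p. L *v x = L *v Ph x})"
    by (intro closed_INT ballI closed_Collect_eq mv_cont)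
  moreover have "closed (\<Inter>l\<in>S. \<Inter>l'\<in>S. {L::real^'p^'p. (L *v h l) \<bullet> (L *v h l') = (if l = l' then 1 else 0)})"
    by (intro closed_INT ballI closed_Collect_eq continuous_on_inner mv_cont continuous_on_const)
  moreover have "closed (\<Inter>l\<in>S. {L::real^'p^'p. Vc (L *v h l) = L *v h l})"
    by (intro closed_INT ballI closed_Collect_eq mv_cont continuous_on_compose2[OF Vc_cont mv_cont]) auto
  ultimately show ?thesis by (simp add: closed_Int)
qed

lemma KK_mult:
  assumes L: "L \<in> KK"
  shows "L *v x = (\<Sum>l\<in>S. (h l \<bullet> x) *\<^sub>R (L *v h l))"
proof -
  have "L *v x = L *v Ph x" using L unfolding KK_def by blast
  also have "\<dots> = (\<Sum>l\<in>S. (h l \<bullet> x) *\<^sub>R (L *v h l))"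
    unfolding Ph_def linear_sum[OF matrix_vector_mul_linear] linear_cmul[OF matrix_vector_mul_linear] ..
  finally show ?thesis .
qed

lemma KK_on: "L \<in> KK \<Longrightarrow> orthonormal_on S (\<lambda>l. L *v h l)"
  unfolding orthonormal_on_def KK_def mem_Collect_eq by (elim conjE)

lemma KK_norm: "L \<in> KK \<Longrightarrow> norm (L *v x) \<le> norm x"
proof -
  assume L: "L \<in> KK"
  have e: "L *v x = (\<Sum>l\<in>S. (h l \<bullet> x) *\<^sub>R (L *v h l))" by (rule KK_mult[OF L])
  have "(norm (L *v x))\<^sup>2 = (\<Sum>l\<in>S. (h l \<bullet> x)\<^sup>2)"
    unfolding e by (rule on_norm2[OF KK_on[OF L]]) simp
  also have "\<dots> \<le> (norm x)\<^sup>2" by (rule on_bessel[OF hS]) simp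
  finally show ?thesis by (rule power2_le_imp_le[OF _ norm_ge_zero])
qed

lemma KK_bounded: "bounded KK"
proof -
  have "norm L \<le> real CARD('p) * real CARD('p)" if L: "L \<in> KK" for L
  proof (rule matrix_norm_le)
    fix i j
    have "L $ i $ j = (L *v axis j 1) $ i"
      by (simp add: matrix_vector_mult_basis column_def)
    then have "\<bar>L $ i $ j\<bar> \<le> norm (L *v axis j 1)" by (simp add: component_le_norm_cart)
    also have "\<dots> \<le> norm (axis j (1::real))" by (rule KK_norm[OF L])
    finally show "\<bar>L $ i $ j\<bar> \<le> 1" by simp
  qed
  then show ?thesis unfolding bounded_iff by (intro exI[of _ "real CARD('p) * real CARD('p)"]) simp
qed

definition L0 :: "real^'p^'p" where "L0 = (\<Sum>l\<in>S. 1 *\<^sub>R outer (hh l) (h l))"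

lemma L0_mult: "L0 *v x = (\<Sum>l\<in>S. (h l \<bullet> x) *\<^sub>R hh l)"
  unfolding L0_def sum_outer_mult by simp

lemma L0_h: "l \<in> S \<Longrightarrow> L0 *v h l = hh l"
  unfolding L0_mult by (rule sum_delta_vec[OF hS]) simp_all

lemma KK_ne: "L0 \<in> KK"
  unfolding KK_def
proof (intro CollectI conjI allI ballI)
  fix x show "L0 *v x = L0 *v Ph x"
    unfolding L0_mult by (rule sum.cong) (simp_all add: Ph_hS)
next
  fix l l' assume "l \<in> S" "l' \<in> S"
  then show "(L0 *v h l) \<bullet> (L0 *v h l') = (if l = l' then 1 else 0)"
    using hhS by (simp add: L0_h orthonormal_on_def)
next
  fix l assume l: "l \<in> S"
  show "Vc (L0 *v h l) = L0 *v h l"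
    unfolding L0_h[OF l] Vc_def by (rule sum_delta_vec[OF hhS]) (use l in simp_all)
qed

lemma ff_cont: "continuous_on UNIV ff"
  unfolding ff_def by (intro continuous_on_sum continuous_on_inner continuous_on_const mv_cont)

lemma max_exists: "\<exists>L\<in>KK. \<forall>L'\<in>KK. ff L' \<le> ff L"
proof (rule continuous_attains_sup)
  show "compact KK" using KK_closed KK_bounded by (simp add: compact_eq_bounded_closed)
  show "KK \<noteq> {}" using KK_ne by blast
  show "continuous_on KK ff" by (rule continuous_on_subset[OF ff_cont]) simp
qed

end


lemma rot_key:
  fixes d A :: real
  assumes H: "\<And>c sn. c\<^sup>2 + sn\<^sup>2 = 1 \<Longrightarrow> c * sn * d \<le> sn\<^sup>2 * A"
  shows "x * (1 - x\<^sup>2) * d \<le> 2 * x\<^sup>2 * A"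
proof -
  define q where "q = 1 + x\<^sup>2"
  have q: "0 < q" unfolding q_def by (simp add: add_pos_nonneg)
  define c where "c = (1 - x\<^sup>2) / q"
  define sn where "sn = 2 * x / q"
  have "c\<^sup>2 + sn\<^sup>2 = ((1 - x\<^sup>2)\<^sup>2 + (2 * x)\<^sup>2) / q\<^sup>2"
    unfolding c_def sn_def by (simp add: power_divide add_divide_distrib)
  also have "(1 - x\<^sup>2)\<^sup>2 + (2 * x)\<^sup>2 = q\<^sup>2" unfolding q_def by (simp add: power2_eq_square algebra_simps)
  finally have "c\<^sup>2 + sn\<^sup>2 = 1" using q by simp
  then have "c * sn * d \<le> sn\<^sup>2 * A" by (rule H)
  then have ineq: "(c * sn * d) * (q\<^sup>2 / 2) \<le> (sn\<^sup>2 * A) * (q\<^sup>2 / 2)" by (rule mult_right_mono) simp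
  have e1: "(c * sn * d) * (q\<^sup>2 / 2) = x * (1 - x\<^sup>2) * d"
    unfolding c_def sn_def using q by (simp add: power2_eq_square field_simps)
  have e2: "(sn\<^sup>2 * A) * (q\<^sup>2 / 2) = 2 * x\<^sup>2 * A"
    unfolding sn_def using q by (simp add: power2_eq_square field_simps)
  show ?thesis using ineq by (simp only: e1 e2)
qed

lemma sym_from_rot:
  fixes d A :: real
  assumes H: "\<And>c sn. c\<^sup>2 + sn\<^sup>2 = 1 \<Longrightarrow> c * sn * d \<le> sn\<^sup>2 * A"
  shows "d = 0"
proof (rule ccontr)
  assume d0: "d \<noteq> 0"
  define t where "t = \<bar>d\<bar> / (4 * \<bar>A\<bar> + 4 * \<bar>d\<bar>)"
  have den: "0 < 4 * \<bar>A\<bar> + 4 * \<bar>d\<bar>" using d0 by simp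
  have t0: "0 < t" unfolding t_def using d0 den by simp
  have t1: "t \<le> 1/4" unfolding t_def using den by (simp add: field_simps)
  define x where "x = (if 0 < d then t else - t)"
  have xd: "x * d = t * \<bar>d\<bar>" and x2: "x\<^sup>2 = t\<^sup>2" unfolding x_def by auto
  have "x * (1 - x\<^sup>2) * d \<le> 2 * x\<^sup>2 * A" by (rule rot_key[OF H])
  moreover have "x * (1 - x\<^sup>2) * d = t * ((1 - t\<^sup>2) * \<bar>d\<bar>)"
  proof -
    have "x * (1 - x\<^sup>2) * d = (1 - x\<^sup>2) * (x * d)" by (simp add: mult_ac)
    also have "\<dots> = (1 - t\<^sup>2) * (t * \<bar>d\<bar>)" by (simp only: xd x2)
    finally show ?thesis by (simp add: mult_ac)
  qed
  moreover have "2 * x\<^sup>2 * A = t * (2 * t * A)" unfolding x2 by (simp add: power2_eq_square mult_ac)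
  ultimately have "t * ((1 - t\<^sup>2) * \<bar>d\<bar>) \<le> t * (2 * t * A)" by simp
  then have "(1 - t\<^sup>2) * \<bar>d\<bar> \<le> 2 * t * A" using t0 by simp
  also have "\<dots> \<le> 2 * t * \<bar>A\<bar>" using t0 by simp
  also have "2 * t * \<bar>A\<bar> = \<bar>d\<bar> * (2 * \<bar>A\<bar> / (4 * \<bar>A\<bar> + 4 * \<bar>d\<bar>))" unfolding t_def by simp
  also have "\<dots> \<le> \<bar>d\<bar> * (1/2)"
    by (rule mult_left_mono) (use den in \<open>simp_all add: field_simps\<close>)
  finally have "(1 - t\<^sup>2) * \<bar>d\<bar> \<le> \<bar>d\<bar> * (1/2)" .
  moreover have "t\<^sup>2 \<le> (1/4)\<^sup>2" by (rule power_mono[OF t1]) (use t0 in simp)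
  then have "15/16 \<le> 1 - t\<^sup>2" by (simp add: power2_eq_square)
  then have "(15/16) * \<bar>d\<bar> \<le> (1 - t\<^sup>2) * \<bar>d\<bar>" by (rule mult_right_mono) simp
  ultimately have "(15/16) * \<bar>d\<bar> \<le> \<bar>d\<bar> * (1/2)" by linarith
  then show False using d0 by simp
qed


lemma sum_delta_real:
  assumes "orthonormal_on I v" "finite I" "k \<in> I"
  shows "(\<Sum>i\<in>I. (v k \<bullet> v i) * f i) = (f k :: real)"
proof -
  have "(\<Sum>i\<in>I. (v k \<bullet> v i) * f i) = (\<Sum>i\<in>I. if i = k then f i else 0)"
    by (rule sum.cong) (use assms in \<open>auto simp: orthonormal_on_def\<close>)
  also have "\<dots> = f k" using assms by (simp add: sum.delta')
  finally show ?thesis .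
qed

lemma quad_cs:
  fixes a b c :: real
  assumes H: "\<And>t. 0 \<le> a + 2 * t * b + t\<^sup>2 * c" and c: "0 \<le> c"
  shows "b\<^sup>2 \<le> a * c"
proof (cases "c = 0")
  case True
  have "b = 0"
  proof (rule ccontr)
    assume b: "b \<noteq> 0"
    have "0 \<le> a + 2 * (- (a + 1) / (2 * b)) * b + (- (a + 1) / (2 * b))\<^sup>2 * c" by (rule H)
    then show False using b True by (simp add: field_simps)
  qed
  then show ?thesis using True by simp
next
  case False
  then have c0: "0 < c" using c by simp
  have "0 \<le> a + 2 * (- b / c) * b + (- b / c)\<^sup>2 * c" by (rule H)
  also have "\<dots> = a - b\<^sup>2 / c" using c0 by (simp add: power2_eq_square field_simps)
  finally have "b\<^sup>2 / c \<le> a" by simp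
  then show ?thesis using c0 by (simp add: field_simps)
qed

context setting begin

definition Rf :: "real^'p \<Rightarrow> real^'p^'p" where "Rf u = mat 1 - 2 *\<^sub>R outer u u"

lemma Rf_mult: "Rf u *v z = z - (2 * (u \<bullet> z)) *\<^sub>R u"
  unfolding Rf_def by (simp add: matrix_vector_mult_diff_rdistrib outer_mult flip: scaleR_matrix_vector_assoc)

lemma Rf_inner:
  assumes "norm u = 1"
  shows "(Rf u *v z) \<bullet> (Rf u *v z') = z \<bullet> z'"
proof -
  have uu: "u \<bullet> u = 1" using assms by (simp add: dot_square_norm)
  show ?thesis unfolding Rf_mult
    by (simp add: inner_diff_left inner_diff_right uu inner_commute algebra_simps)
qed

lemma Vc_diff: "Vc (a - b) = Vc a - Vc b" by (rule linear_diff[OF Vc_linear])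
lemma Vc_scale': "Vc (c *\<^sub>R a) = c *\<^sub>R Vc a" by (rule Vc_scale)

lemma KK_refl:
  assumes L: "L \<in> KK" and u: "Vc u = u" "norm u = 1"
  shows "Rf u ** L \<in> KK"
proof -
  have c1: "\<forall>x. L *v x = L *v Ph x" and c2: "\<forall>l\<in>S. \<forall>l'\<in>S. (L *v h l) \<bullet> (L *v h l') = (if l = l' then 1 else 0)"
    and c3: "\<forall>l\<in>S. Vc (L *v h l) = L *v h l" using L unfolding KK_def by auto
  show ?thesis unfolding KK_def mem_Collect_eq
  proof (intro conjI allI ballI)
    fix x show "(Rf u ** L) *v x = (Rf u ** L) *v Ph x"
      unfolding matrix_vector_mul_assoc[symmetric] using c1 by simp
  next
    fix l l' assume "l \<in> S" "l' \<in> S"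
    then show "((Rf u ** L) *v h l) \<bullet> ((Rf u ** L) *v h l') = (if l = l' then 1 else 0)"
      unfolding matrix_vector_mul_assoc[symmetric] Rf_inner[OF u(2)] using c2 by simp
  next
    fix l assume l: "l \<in> S"
    show "Vc ((Rf u ** L) *v h l) = (Rf u ** L) *v h l"
      unfolding matrix_vector_mul_assoc[symmetric] Rf_mult Vc_diff Vc_scale' u(1) using c3 l by simp
  qed
qed

definition BB :: "real^'p^'p \<Rightarrow> real^'p \<Rightarrow> real^'p \<Rightarrow> real" where
  "BB L u y = (\<Sum>l\<in>S. (u \<bullet> (L *v h l)) * (h l \<bullet> y))"

lemma ff_refl: "ff (Rf u ** L) = ff L - 2 * BB L u u"
  unfolding ff_def BB_def matrix_vector_mul_assoc[symmetric] Rf_mult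
  by (simp add: inner_diff_right sum_subtractf sum_distrib_left algebra_simps)

lemma BB_refl: "BB (Rf u ** L) y y = BB L y y - 2 * (u \<bullet> y) * BB L u y"
  unfolding BB_def matrix_vector_mul_assoc[symmetric] Rf_mult
  by (simp add: inner_diff_right sum_subtractf sum_distrib_left algebra_simps inner_commute)

definition Lm :: "real^'p^'p" where "Lm = (SOME L. L \<in> KK \<and> (\<forall>L'\<in>KK. ff L' \<le> ff L))"

lemma Lm: "Lm \<in> KK" "L' \<in> KK \<Longrightarrow> ff L' \<le> ff Lm"
proof -
  have "\<exists>L. L \<in> KK \<and> (\<forall>L'\<in>KK. ff L' \<le> ff L)" using max_exists by blast
  then have "Lm \<in> KK \<and> (\<forall>L'\<in>KK. ff L' \<le> ff Lm)" unfolding Lm_def by (rule someI_ex)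
  then show "Lm \<in> KK" "L' \<in> KK \<Longrightarrow> ff L' \<le> ff Lm" by auto
qed

lemma psd1:
  assumes "Vc u = u" "norm u = 1"
  shows "0 \<le> BB Lm u u"
proof -
  have "ff (Rf u ** Lm) \<le> ff Lm" by (rule Lm(2)[OF KK_refl[OF Lm(1) assms]])
  then show ?thesis unfolding ff_refl by simp
qed

lemma rot1:
  assumes u: "Vc u = u" "norm u = 1" and v: "Vc v = v" "norm v = 1"
  shows "2 * (u \<bullet> v) * BB Lm u v \<le> BB Lm u u + BB Lm v v"
proof -
  have "ff (Rf v ** (Rf u ** Lm)) \<le> ff Lm" by (rule Lm(2)[OF KK_refl[OF KK_refl[OF Lm(1) u] v]])
  then show ?thesis unfolding ff_refl BB_refl by simp
qed

definition ww where "ww l = Lm *v h l"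

lemma ww_on: "orthonormal_on S ww" unfolding ww_def by (rule KK_on[OF Lm(1)])
lemma ww_Vc: "l \<in> S \<Longrightarrow> Vc (ww l) = ww l" using Lm(1) unfolding KK_def ww_def by auto
lemma ww_norm: "l \<in> S \<Longrightarrow> norm (ww l) = 1"
  using ww_on unfolding orthonormal_on_def by (simp add: norm_eq_sqrt_inner)

lemma BB_lin1: "BB L (a *\<^sub>R x + b *\<^sub>R y) z = a * BB L x z + b * BB L y z"
  unfolding BB_def by (simp add: inner_add_left sum.distrib sum_distrib_left algebra_simps)

lemma BB_ww: "a \<in> S \<Longrightarrow> BB Lm (ww a) y = h a \<bullet> y"
  unfolding BB_def ww_def[symmetric] by (rule sum_delta_real[OF ww_on]) simp_all

lemma msym:
  assumes a: "a \<in> S" and b: "b \<in> S"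
  shows "h a \<bullet> ww b = h b \<bullet> ww a"
proof (cases "a = b")
  case False
  let ?maa = "h a \<bullet> ww a" and ?mab = "h a \<bullet> ww b" and ?mba = "h b \<bullet> ww a" and ?mbb = "h b \<bullet> ww b"
  have "?mab - ?mba = 0"
  proof (rule sym_from_rot)
    fix c sn :: real assume csn: "c\<^sup>2 + sn\<^sup>2 = 1"
    let ?u = "ww a" and ?v = "c *\<^sub>R ww a + sn *\<^sub>R ww b"
    have uV: "Vc ?u = ?u" "norm ?u = 1" using ww_Vc ww_norm a by auto
    have vV: "Vc ?v = ?v" using ww_Vc a b by (simp add: Vc_add Vc_scale)
    have wab: "ww a \<bullet> ww b = 0" "ww b \<bullet> ww a = 0" "ww a \<bullet> ww a = 1" "ww b \<bullet> ww b = 1"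
      using ww_on a b False unfolding orthonormal_on_def by auto
    have "(norm ?v)\<^sup>2 = ?v \<bullet> ?v" by (simp only: dot_square_norm)
    also have "\<dots> = c\<^sup>2 + sn\<^sup>2"
      by (simp add: inner_add_left inner_add_right wab power2_eq_square)
    finally have "(norm ?v)\<^sup>2 = c\<^sup>2 + sn\<^sup>2" .
    then have "(norm ?v)\<^sup>2 = 1\<^sup>2" using csn by simp
    then have vn: "norm ?v = 1" using power2_eq_iff_nonneg[of "norm ?v" 1] by simp
    have uv: "?u \<bullet> ?v = c" by (simp add: inner_add_right wab)
    have Buu: "BB Lm ?u ?u = ?maa" by (rule BB_ww[OF a])
    have Buv: "BB Lm ?u ?v = c * ?maa + sn * ?mab" by (simp add: BB_ww[OF a] inner_add_right)
    have Bvv: "BB Lm ?v ?v = c * (c * ?maa + sn * ?mab) + sn * (c * ?mba + sn * ?mbb)"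
      by (simp add: BB_lin1 BB_ww[OF a] BB_ww[OF b] inner_add_right)
    have r: "2 * c * (c * ?maa + sn * ?mab) \<le> ?maa + (c * (c * ?maa + sn * ?mab) + sn * (c * ?mba + sn * ?mbb))"
      using rot1[OF uV vV vn] unfolding uv Buu Buv Bvv .
    have e: "sn\<^sup>2 * (?maa + ?mbb) - c * sn * (?mab - ?mba)
        = (?maa + (c * (c * ?maa + sn * ?mab) + sn * (c * ?mba + sn * ?mbb))) - 2 * c * (c * ?maa + sn * ?mab)
          + ?maa * (c\<^sup>2 + sn\<^sup>2 - 1)"
      by (simp add: algebra_simps power2_eq_square)
    show "c * sn * (?mab - ?mba) \<le> sn\<^sup>2 * (?maa + ?mbb)"
      using r e csn by simp
  qed
  then show ?thesis by simp
qed simp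

end


context setting begin

lemma Lm_mult: "Lm *v x = (\<Sum>l\<in>S. (h l \<bullet> x) *\<^sub>R ww l)"
  unfolding ww_def by (rule KK_mult[OF Lm(1)])

lemma Vc_Lm: "Vc (Lm *v x) = Lm *v x"
proof -
  have "Vc (Lm *v x) = (\<Sum>l\<in>S. (h l \<bullet> x) *\<^sub>R Vc (ww l))"
    unfolding Lm_mult linear_sum[OF Vc_linear] linear_cmul[OF Vc_linear] ..
  also have "\<dots> = Lm *v x" unfolding Lm_mult by (rule sum.cong) (simp_all add: ww_Vc)
  finally show ?thesis .
qed

lemma ww_Lm: "l \<in> S \<Longrightarrow> ww l \<bullet> (Lm *v x) = h l \<bullet> x"
  unfolding Lm_mult by (rule on_sum_inner[OF ww_on]) simp_all

lemma Ph_lin: "linear Ph" unfolding Ph_def[abs_def] by (rule lin_proj)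
lemma Ph_sa: "x \<bullet> Ph y = Ph x \<bullet> y"
  unfolding Ph_def by (simp add: inner_sum_left inner_sum_right inner_commute mult.commute)
lemma Ph_idem: "Ph (Ph x) = Ph x"
proof -
  have "Ph (Ph x) = (\<Sum>l\<in>S. (h l \<bullet> Ph x) *\<^sub>R h l)" by (simp only: Ph_def[of "Ph x"])
  also have "\<dots> = (\<Sum>l\<in>S. (h l \<bullet> x) *\<^sub>R h l)" by (rule sum.cong) (simp_all add: Ph_hS)
  also have "\<dots> = Ph x" by (simp only: Ph_def)
  finally show ?thesis .
qed
lemma Ph_self: "Ph z \<bullet> z = (norm (Ph z))\<^sup>2"
proof -
  have "Ph z \<bullet> z = (\<Sum>l\<in>S. (h l \<bullet> z)\<^sup>2)" unfolding Ph_def inner_sum_left inner_scaleR_left by (simp only: power2_eq_square)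
  also have "\<dots> = (norm (Ph z))\<^sup>2" unfolding Ph_def by (rule on_norm2[OF hS, symmetric]) simp
  finally show ?thesis .
qed
lemma Lm_norm2: "(norm (Lm *v x))\<^sup>2 = (norm (Ph x))\<^sup>2"
proof -
  have "(norm (Lm *v x))\<^sup>2 = (\<Sum>l\<in>S. (h l \<bullet> x)\<^sup>2)" unfolding Lm_mult by (rule on_norm2[OF ww_on]) simp
  also have "\<dots> = (norm (Ph x))\<^sup>2" unfolding Ph_def by (rule on_norm2[OF hS, symmetric]) simp
  finally show ?thesis .
qed

lemma BB_Lm: "BB Lm (Lm *v x) y = Ph x \<bullet> y"
proof -
  have "BB Lm (Lm *v x) y = (\<Sum>l\<in>S. (h l \<bullet> x) * (h l \<bullet> y))"
    unfolding BB_def ww_def[symmetric] by (rule sum.cong) (simp_all add: inner_commute[of "Lm *v x"] ww_Lm)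
  also have "\<dots> = Ph x \<bullet> y" unfolding Ph_def by (simp add: inner_sum_left)
  finally show ?thesis .
qed

lemma BB_scale: "BB L (c *\<^sub>R u) (c *\<^sub>R u) = c\<^sup>2 * BB L u u"
  unfolding BB_def by (simp add: sum_distrib_left power2_eq_square algebra_simps)

lemma psd: assumes "Vc u = u" shows "0 \<le> BB Lm u u"
proof (cases "u = 0")
  case True then show ?thesis by (simp add: BB_def)
next
  case False
  let ?c = "1 / norm u"
  have "Vc (?c *\<^sub>R u) = ?c *\<^sub>R u" using assms by (simp add: Vc_scale)
  moreover have "norm (?c *\<^sub>R u) = 1" using False by simp
  ultimately have "0 \<le> BB Lm (?c *\<^sub>R u) (?c *\<^sub>R u)" by (rule psd1)
  then have "0 \<le> ?c\<^sup>2 * BB Lm u u" by (simp only: BB_scale)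
  then show ?thesis using False by (simp add: zero_le_mult_iff)
qed

lemma psd_vec: "0 \<le> Ph x \<bullet> (Lm *v x)"
  using psd[OF Vc_Lm[of x]] by (simp add: BB_Lm)

lemma expand_bf: "Ph x \<bullet> (Lm *v y) = (\<Sum>a\<in>S. \<Sum>b\<in>S. (h a \<bullet> x) * ((h b \<bullet> y) * (h a \<bullet> ww b)))"
proof -
  have 1: "Ph x \<bullet> (Lm *v y) = (\<Sum>a\<in>S. (h a \<bullet> x) * (h a \<bullet> (Lm *v y)))"
    unfolding Ph_def inner_sum_left inner_scaleR_left ..
  have 2: "h a \<bullet> (Lm *v y) = (\<Sum>b\<in>S. (h b \<bullet> y) * (h a \<bullet> ww b))" for a
    unfolding Lm_mult inner_sum_right inner_scaleR_right ..
  show ?thesis unfolding 1 2 sum_distrib_left ..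
qed

lemma sym_vec: "Ph x \<bullet> (Lm *v y) = Ph y \<bullet> (Lm *v x)"
proof -
  have "Ph x \<bullet> (Lm *v y) = (\<Sum>a\<in>S. \<Sum>b\<in>S. (h a \<bullet> x) * ((h b \<bullet> y) * (h a \<bullet> ww b)))" by (rule expand_bf)
  also have "\<dots> = (\<Sum>b\<in>S. \<Sum>a\<in>S. (h a \<bullet> x) * ((h b \<bullet> y) * (h a \<bullet> ww b)))" by (rule sum.swap)
  also have "\<dots> = (\<Sum>b\<in>S. \<Sum>a\<in>S. (h b \<bullet> y) * ((h a \<bullet> x) * (h b \<bullet> ww a)))"
    by (intro sum.cong refl) (simp add: msym mult_ac)
  also have "\<dots> = Ph y \<bullet> (Lm *v x)" by (rule expand_bf[symmetric])
  finally show ?thesis .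
qed

definition "bf x y = Ph x \<bullet> (Lm *v y)"

lemma bf_quad: fixes tt :: real shows "bf (x + tt *\<^sub>R y) (x + tt *\<^sub>R y) = bf x x + 2 * tt * bf x y + tt\<^sup>2 * bf y y"
proof -
  have "bf (x + tt *\<^sub>R y) (x + tt *\<^sub>R y) = bf x x + tt * bf x y + tt * bf y x + tt\<^sup>2 * bf y y"
    unfolding bf_def linear_add[OF Ph_lin] linear_cmul[OF Ph_lin]
      linear_add[OF matrix_vector_mul_linear] linear_cmul[OF matrix_vector_mul_linear]
    by (simp add: inner_add_left inner_add_right power2_eq_square algebra_simps)
  moreover have "bf y x = bf x y" unfolding bf_def by (rule sym_vec)
  ultimately show ?thesis by simp
qed

lemma bf_cs: "(bf x y)\<^sup>2 \<le> bf x x * bf y y"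
proof (rule quad_cs)
  fix tt show "0 \<le> bf x x + 2 * tt * bf x y + tt\<^sup>2 * bf y y"
  proof -
    have p: "0 \<le> bf (x + tt *\<^sub>R y) (x + tt *\<^sub>R y)" unfolding bf_def by (rule psd_vec)
    show ?thesis using p bf_quad[of x tt y] by linarith
  qed
  show "0 \<le> bf y y" unfolding bf_def by (rule psd_vec)
qed

lemma key_ineq:
  assumes v: "Ph v = v"
  shows "norm (v - Ph (Lm *v v)) \<le> norm (Lm *v v - Ph (Lm *v v))"
proof -
  define a where "a = Ph (Lm *v v)"
  have Pa: "Ph a = a" unfolding a_def by (rule Ph_idem)
  have bva: "bf v a = (norm a)\<^sup>2"
  proof -
    have "bf v a = bf a v" unfolding bf_def by (rule sym_vec)
    also have "\<dots> = a \<bullet> (Lm *v v)" unfolding bf_def Pa ..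
    also have "\<dots> = (norm a)\<^sup>2" unfolding a_def by (rule Ph_self)
    finally show ?thesis .
  qed
  have baa: "bf a a \<le> (norm a)\<^sup>2"
  proof -
    have "bf a a = a \<bullet> (Lm *v a)" unfolding bf_def Pa ..
    also have "\<dots> \<le> norm a * norm (Lm *v a)" by (rule norm_cauchy_schwarz)
    also have "\<dots> \<le> norm a * norm a" by (rule mult_left_mono[OF KK_norm[OF Lm(1)] norm_ge_zero])
    finally show ?thesis by (simp add: power2_eq_square)
  qed
  have bvv0: "0 \<le> bf v v" unfolding bf_def by (rule psd_vec)
  have na: "(norm a)\<^sup>2 \<le> bf v v"
  proof (cases "norm a = 0")
    case True then show ?thesis using bvv0 by simp
  next
    case False
    define n2 where "n2 = (norm a)\<^sup>2"
    have n2p: "0 < n2" unfolding n2_def using False by simp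
    have "n2 * n2 \<le> bf v v * bf a a" using bf_cs[of v a] unfolding bva n2_def[symmetric] by (simp add: power2_eq_square)
    also have "\<dots> \<le> bf v v * n2" unfolding n2_def by (rule mult_left_mono[OF baa bvv0])
    finally have "n2 * n2 \<le> bf v v * n2" .
    then show ?thesis using n2p unfolding n2_def[symmetric] by (simp add: mult_le_cancel_right)
  qed
  have va: "v \<bullet> a = bf v v" unfolding a_def bf_def Ph_sa v ..
  have "(norm (v - a))\<^sup>2 = (norm v)\<^sup>2 - 2 * (v \<bullet> a) + (norm a)\<^sup>2"
    by (simp add: power2_norm_eq_inner inner_diff_left inner_diff_right inner_commute)
  also have "\<dots> \<le> (norm v)\<^sup>2 - (norm a)\<^sup>2" unfolding va using na by simp
  also have "\<dots> = (norm (Lm *v v))\<^sup>2 - (norm a)\<^sup>2" unfolding Lm_norm2 v ..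
  also have "\<dots> = (norm (Lm *v v - a))\<^sup>2"
  proof -
    have "(norm (Lm *v v - a))\<^sup>2 = (norm (Lm *v v))\<^sup>2 - (\<Sum>l\<in>S. (h l \<bullet> (Lm *v v))\<^sup>2)"
      unfolding a_def Ph_def by (rule on_pyth[OF hS]) simp
    moreover have "(norm a)\<^sup>2 = (\<Sum>l\<in>S. (h l \<bullet> (Lm *v v))\<^sup>2)"
      unfolding a_def Ph_def by (rule on_norm2[OF hS]) simp
    ultimately show ?thesis by simp
  qed
  finally have "(norm (v - a))\<^sup>2 \<le> (norm (Lm *v v - a))\<^sup>2" .
  then show ?thesis unfolding a_def[symmetric] by (rule power2_le_imp_le[OF _ norm_ge_zero])
qed

lemma lm_sin:
  assumes v: "Ph v = v"
  shows "norm (Lm *v v - Ph (Lm *v v)) \<le> sqrt 2 * \<epsilon> / \<delta> * norm v"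
proof -
  have "norm (Vc (Lm *v v) - (\<Sum>i\<in>S. (h i \<bullet> Vc (Lm *v v)) *\<^sub>R h i)) \<le> sqrt 2 * \<epsilon> / \<delta> * norm (Lm *v v)"
    by (rule sinR)
  moreover have "norm (Lm *v v) = norm v"
    using Lm_norm2[of v] v by (simp add: power2_eq_iff_nonneg)
  ultimately show ?thesis unfolding Vc_Lm Ph_def by simp
qed

end


lemma axis_inner: "axis j (1::real) \<bullet> x = x $ j"
  by (simp add: inner_axis')

context setting begin

definition Gm where "Gm x = (\<Sum>m\<in>S. ((hh m \<bullet> x) / \<sigma>h m) *\<^sub>R gh m)"

lemma sigh_S_pos': "m \<in> S \<Longrightarrow> 0 < \<sigma>h m"
  using sigh_S_pos[of m] Delta_pos by linarith

lemma Qh_gh: "m \<in> {1..CARD('p)} \<Longrightarrow> (Qh *v a) \<bullet> gh m = \<sigma>h m * (hh m \<bullet> a)"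
  unfolding Qhmul by (rule on_sum_inner'[OF gh_on]) simp_all

lemma Qh_Gm:
  assumes x: "Vc x = x"
  shows "(Qh *v a) \<bullet> Gm x = a \<bullet> x"
proof -
  have "(Qh *v a) \<bullet> Gm x = (\<Sum>m\<in>S. ((hh m \<bullet> x) / \<sigma>h m) * ((Qh *v a) \<bullet> gh m))"
    unfolding Gm_def inner_sum_right inner_scaleR_right ..
  also have "\<dots> = (\<Sum>m\<in>S. (hh m \<bullet> x) * (a \<bullet> hh m))"
  proof (rule sum.cong)
    fix m assume m: "m \<in> S"
    then have "m \<in> {1..CARD('p)}" using SN by auto
    then have q: "(Qh *v a) \<bullet> gh m = \<sigma>h m * (hh m \<bullet> a)" by (rule Qh_gh)
    have p: "\<sigma>h m \<noteq> 0" using sigh_S_pos'[OF m] by simp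
    show "((hh m \<bullet> x) / \<sigma>h m) * ((Qh *v a) \<bullet> gh m) = (hh m \<bullet> x) * (a \<bullet> hh m)"
      unfolding q using p by (simp add: inner_commute[of a])
  qed simp
  also have "\<dots> = a \<bullet> Vc x" unfolding Vc_def inner_sum_right inner_scaleR_right ..
  finally show ?thesis using x by simp
qed

lemma nGm: "norm (Gm x) \<le> 2 / \<Delta> * norm x"
proof -
  have "(norm (Gm x))\<^sup>2 = (\<Sum>m\<in>S. ((hh m \<bullet> x) / \<sigma>h m)\<^sup>2)"
    unfolding Gm_def by (rule on_norm2[OF ghS]) simp
  also have "\<dots> \<le> (2 / \<Delta>)\<^sup>2 * (\<Sum>m\<in>S. (hh m \<bullet> x)\<^sup>2)"
  proof (rule sum_sq_le)
    fix m assume m: "m \<in> S"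
    have p: "0 < \<sigma>h m" by (rule sigh_S_pos'[OF m])
    have "1 / \<sigma>h m \<le> 2 / \<Delta>" using sigh_S_pos[OF m] p Delta_pos by (simp add: field_simps)
    then have "(1 / \<sigma>h m)\<^sup>2 \<le> (2 / \<Delta>)\<^sup>2" by (rule power_mono) (use p in simp)
    then have "(1 / \<sigma>h m)\<^sup>2 * (hh m \<bullet> x)\<^sup>2 \<le> (2 / \<Delta>)\<^sup>2 * (hh m \<bullet> x)\<^sup>2" by (rule mult_right_mono) simp
    then show "((hh m \<bullet> x) / \<sigma>h m)\<^sup>2 \<le> (2 / \<Delta>)\<^sup>2 * (hh m \<bullet> x)\<^sup>2"
      by (simp add: power_divide)
  qed simp
  also have "\<dots> \<le> (2 / \<Delta>)\<^sup>2 * (norm x)\<^sup>2" by (rule mult_left_mono[OF on_bessel[OF hhS]]) simp_all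
  finally have c1: "(norm (Gm x))\<^sup>2 \<le> (2 / \<Delta> * norm x)\<^sup>2" by (simp only: power_mult_distrib)
  have c2: "0 \<le> 2 / \<Delta> * norm x" using Delta_pos by simp
  show ?thesis by (rule power2_le_imp_le[OF c1 c2])
qed

lemma Gm_sin: "norm (Gm x - (\<Sum>i\<in>S. (g i \<bullet> Gm x) *\<^sub>R g i)) \<le> sqrt 2 * \<epsilon> / \<delta> * norm (Gm x)"
proof -
  define y where "y = (\<Sum>m\<in>S. ((hh m \<bullet> x) / \<sigma>h m) *\<^sub>R hh m)"
  have Uy: "Uc y = Gm x"
    unfolding Uc_def Gm_def y_def by (rule sum.cong) (simp_all add: on_sum_inner[OF hhS])
  have "(norm y)\<^sup>2 = (norm (Gm x))\<^sup>2"
    unfolding y_def Gm_def on_norm2[OF hhS finite_atLeastAtMost] on_norm2[OF ghS finite_atLeastAtMost] ..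
  then have ny: "norm y = norm (Gm x)" by (simp add: power2_eq_iff_nonneg)
  show ?thesis using sinG[of y] unfolding Uy ny .
qed

definition pij :: "'p \<Rightarrow> real^'p" where "pij j = (\<Sum>i\<in>{1..r}. (h i $ j) *\<^sub>R h i)"

lemma h_pij: "i \<in> {1..r} \<Longrightarrow> h i \<bullet> pij j = h i $ j"
  unfolding pij_def by (rule on_sum_inner[OF h_on]) simp_all

lemma norm_pij: "norm (pij j) = L2_set (\<lambda>i. h i $ j) {1..r}"
proof -
  have "(norm (pij j))\<^sup>2 = (\<Sum>i\<in>{1..r}. (h i $ j)\<^sup>2)" unfolding pij_def by (rule on_norm2[OF h_on]) simp
  then show ?thesis unfolding L2_set_def by (simp add: real_sqrt_unique)
qed

lemma Q_pij: "Q *v axis j 1 = Q *v pij j"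
  unfolding Qmul
proof (rule sum.cong)
  fix i assume i: "i \<in> {1..r}"
  have "h i \<bullet> axis j 1 = h i $ j" using axis_inner[of j "h i"] by (simp add: inner_commute)
  then show "(\<sigma> i * (h i \<bullet> axis j 1)) *\<^sub>R g i = (\<sigma> i * (h i \<bullet> pij j)) *\<^sub>R g i"
    using h_pij[OF i] by simp
qed simp

lemma ident_ej:
  assumes x: "Vc x = x"
  shows "x $ j = pij j \<bullet> x - (E *v pij j) \<bullet> Gm x + (E *v axis j 1) \<bullet> Gm x"
proof -
  have "x $ j = axis j 1 \<bullet> x" by (simp add: axis_inner)
  also have "\<dots> = (Qh *v axis j 1) \<bullet> Gm x" by (rule Qh_Gm[OF x, symmetric])
  also have "\<dots> = (Q *v pij j) \<bullet> Gm x + (E *v axis j 1) \<bullet> Gm x"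
    unfolding Q_pij[symmetric] Emul by (simp add: inner_diff_left)
  also have "(Q *v pij j) = Qh *v pij j - E *v pij j" by (simp add: Emul)
  finally show ?thesis unfolding inner_diff_left Qh_Gm[OF x] .
qed

end


lemma arith_final:
  fixes n P G e D X s2 Sa :: real
  assumes n: "0 \<le> n" and P: "0 \<le> P" and G: "0 \<le> G" and e: "0 \<le> e" and D: "0 < D"
    and X: "0 \<le> X" "X \<le> 2 * s2 * e / D" and s2: "0 \<le> s2" "s2 \<le> 2"
    and Sa: "Sa \<le> P * (2 * X * n) + (e * P) * (2 / D * n) + G * (2 / D * n) + e * (X * (2 / D * n))"
  shows "Sa \<le> n * (2 / D * G + 4 * (1 + s2) / D * P * e + 8 / D\<^sup>2 * e\<^sup>2)"
proof -
  have 1: "P * (2 * X * n) \<le> P * (2 * (2 * s2 * e / D) * n)"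
    using X P n by (intro mult_left_mono mult_right_mono) simp_all
  have 2: "e * (X * (2 / D * n)) \<le> e * ((2 * s2 * e / D) * (2 / D * n))"
    using X e n D by (intro mult_left_mono mult_right_mono) simp_all
  have 3: "n * (2 / D * G + 4 * (1 + s2) / D * P * e + 8 / D\<^sup>2 * e\<^sup>2)
     - (P * (2 * (2 * s2 * e / D) * n) + (e * P) * (2 / D * n) + G * (2 / D * n) + e * ((2 * s2 * e / D) * (2 / D * n)))
     = 2 * (n * P * e) / D + 4 * (2 - s2) * (n * e\<^sup>2) / D\<^sup>2"
    using D by (simp add: field_simps power2_eq_square)
  have 4: "0 \<le> 2 * (n * P * e) / D + 4 * (2 - s2) * (n * e\<^sup>2) / D\<^sup>2"
    using n P e D s2 by (intro add_nonneg_nonneg divide_nonneg_pos mult_nonneg_nonneg) simp_all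
  show ?thesis using Sa 1 2 3 4 by argo
qed


context setting begin

definition PG where "PG z = (\<Sum>i\<in>S. (g i \<bullet> z) *\<^sub>R g i)"

lemma PG_inner: "z \<bullet> PG y = PG z \<bullet> y"
  unfolding PG_def by (simp add: inner_sum_left inner_sum_right inner_commute mult.commute)

lemma norm_PG: "norm (PG z) = L2_set (\<lambda>l. g l \<bullet> z) S"
proof -
  have "(norm (PG z))\<^sup>2 = (\<Sum>l\<in>S. (g l \<bullet> z)\<^sup>2)" unfolding PG_def by (rule on_norm2[OF gS]) simp
  then show ?thesis unfolding L2_set_def by (simp add: real_sqrt_unique)
qed

lemma X_le: "sqrt 2 * \<epsilon> / \<delta> \<le> 2 * sqrt 2 * \<epsilon> / \<Delta>"
proof -
  have "1 / \<delta> \<le> 2 / \<Delta>" using delta_ge delta_pos Delta_pos by (simp add: field_simps)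
  then have "(sqrt 2 * \<epsilon>) * (1 / \<delta>) \<le> (sqrt 2 * \<epsilon>) * (2 / \<Delta>)"
    by (rule mult_left_mono) (use eps_nonneg in simp)
  then show ?thesis by (simp add: mult.commute mult.left_commute)
qed

lemma final_j:
  "L2_set (\<lambda>l. ww l $ j - h l $ j) S
     \<le> 2 / \<Delta> * L2_set (\<lambda>l. g l \<bullet> (E *v axis j 1)) S
       + 4 * (1 + sqrt 2) / \<Delta> * L2_set (\<lambda>i. h i $ j) {1..r} * \<epsilon>
       + 8 / \<Delta>\<^sup>2 * \<epsilon>\<^sup>2"
proof -
  define a where "a l = ww l $ j - h l $ j" for l
  define v where "v = (\<Sum>l\<in>S. a l *\<^sub>R h l)"
  define u where "u = Lm *v v"
  define X where "X = sqrt 2 * \<epsilon> / \<delta>"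
  define ee where "ee = E *v axis j 1"
  have hv: "h l \<bullet> v = a l" if "l \<in> S" for l unfolding v_def by (rule on_sum_inner[OF hS _ that]) simp
  have Pv: "Ph v = v" unfolding Ph_def by (subst (2) v_def) (rule sum.cong, simp_all add: hv)
  have nv2: "(norm v)\<^sup>2 = (\<Sum>l\<in>S. (a l)\<^sup>2)" unfolding v_def by (rule on_norm2[OF hS]) simp
  have nv: "norm v = L2_set a S" unfolding L2_set_def using nv2 by (simp add: real_sqrt_unique)
  have u_eq: "u = (\<Sum>l\<in>S. a l *\<^sub>R ww l)" unfolding u_def Lm_mult by (rule sum.cong) (simp_all add: hv)
  have Vu: "Vc u = u" unfolding u_def by (rule Vc_Lm)
  have nu: "norm u = norm v" unfolding u_def using Lm_norm2[of v] Pv by (simp add: power2_eq_iff_nonneg)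
  have sumsq: "(\<Sum>l\<in>S. (a l)\<^sup>2) = u $ j - v $ j"
    unfolding u_eq v_def sum_component by (simp add: sum_subtractf[symmetric] a_def power2_eq_square algebra_simps)
  have ej_v: "v $ j = pij j \<bullet> v"
  proof -
    have "pij j \<bullet> v = (\<Sum>l\<in>S. a l * (h l \<bullet> pij j))" unfolding v_def by (simp add: inner_sum_right inner_commute)
    also have "\<dots> = (\<Sum>l\<in>S. a l * h l $ j)" by (rule sum.cong) (use SR h_pij in auto)
    also have "\<dots> = v $ j" unfolding v_def sum_component by simp
    finally show ?thesis by simp
  qed
  have main: "(\<Sum>l\<in>S. (a l)\<^sup>2) = pij j \<bullet> (u - v) - (E *v pij j) \<bullet> Gm u + ee \<bullet> Gm u"
    unfolding sumsq ident_ej[OF Vu, of j] ej_v ee_def by (simp add: inner_diff_right)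
  have sin1: "norm (u - Ph u) \<le> X * norm v" unfolding u_def X_def by (rule lm_sin[OF Pv])
  have sin2: "norm (v - Ph u) \<le> X * norm v" unfolding u_def using key_ineq[OF Pv] sin1[unfolded u_def] by linarith
  have nuv: "norm (u - v) \<le> 2 * X * norm v"
  proof -
    have "u - v = (u - Ph u) - (v - Ph u)" by simp
    then have "norm (u - v) \<le> norm (u - Ph u) + norm (v - Ph u)" using norm_triangle_ineq4[of "u - Ph u" "v - Ph u"] by simp
    then show ?thesis using sin1 sin2 by simp
  qed
  have nG: "norm (Gm u) \<le> 2 / \<Delta> * norm v" using nGm[of u] nu by simp
  have X0: "0 \<le> X" unfolding X_def using eps_nonneg delta_pos by simp
  have t1: "pij j \<bullet> (u - v) \<le> norm (pij j) * (2 * X * norm v)"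
  proof -
    have "pij j \<bullet> (u - v) \<le> norm (pij j) * norm (u - v)" by (rule norm_cauchy_schwarz)
    also have "\<dots> \<le> norm (pij j) * (2 * X * norm v)" by (rule mult_left_mono[OF nuv norm_ge_zero])
    finally show ?thesis .
  qed
  have t2: "- ((E *v pij j) \<bullet> Gm u) \<le> (\<epsilon> * norm (pij j)) * (2 / \<Delta> * norm v)"
  proof -
    have "- ((E *v pij j) \<bullet> Gm u) \<le> norm (E *v pij j) * norm (Gm u)"
      using norm_cauchy_schwarz[of "- (E *v pij j)" "Gm u"] by simp
    also have "\<dots> \<le> (\<epsilon> * norm (pij j)) * (2 / \<Delta> * norm v)"
      by (rule mult_mono[OF Enorm nG]) (use eps_nonneg in simp_all)
    finally show ?thesis .
  qed
  have t3: "ee \<bullet> Gm u \<le> L2_set (\<lambda>l. g l \<bullet> ee) S * (2 / \<Delta> * norm v) + \<epsilon> * (X * (2 / \<Delta> * norm v))"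
  proof -
    have split: "ee \<bullet> Gm u = PG ee \<bullet> Gm u + ee \<bullet> (Gm u - PG (Gm u))"
      by (simp add: inner_diff_right PG_inner)
    have "PG ee \<bullet> Gm u \<le> norm (PG ee) * norm (Gm u)" by (rule norm_cauchy_schwarz)
    also have "\<dots> \<le> L2_set (\<lambda>l. g l \<bullet> ee) S * (2 / \<Delta> * norm v)"
      unfolding norm_PG by (rule mult_left_mono[OF nG]) (simp add: L2_set_nonneg)
    finally have a1: "PG ee \<bullet> Gm u \<le> L2_set (\<lambda>l. g l \<bullet> ee) S * (2 / \<Delta> * norm v)" .
    have "ee \<bullet> (Gm u - PG (Gm u)) \<le> norm ee * norm (Gm u - PG (Gm u))" by (rule norm_cauchy_schwarz)
    also have "\<dots> \<le> \<epsilon> * (X * norm (Gm u))"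
    proof (rule mult_mono)
      show "norm ee \<le> \<epsilon>" unfolding ee_def using Enorm[of "axis j 1"] by simp
      show "norm (Gm u - PG (Gm u)) \<le> X * norm (Gm u)" unfolding PG_def X_def by (rule Gm_sin)
    qed (use eps_nonneg in simp_all)
    also have "\<dots> \<le> \<epsilon> * (X * (2 / \<Delta> * norm v))"
      by (intro mult_left_mono nG X0 eps_nonneg)
    finally have a2: "ee \<bullet> (Gm u - PG (Gm u)) \<le> \<epsilon> * (X * (2 / \<Delta> * norm v))" .
    show ?thesis unfolding split using a1 a2 by linarith
  qed
  have S1: "(\<Sum>l\<in>S. (a l)\<^sup>2) \<le> norm (pij j) * (2 * X * norm v) + (\<epsilon> * norm (pij j)) * (2 / \<Delta> * norm v)
      + L2_set (\<lambda>l. g l \<bullet> ee) S * (2 / \<Delta> * norm v) + \<epsilon> * (X * (2 / \<Delta> * norm v))"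
    unfolding main using t1 t2 t3 by linarith
  have fin: "(\<Sum>l\<in>S. (a l)\<^sup>2) \<le> norm v * (2 / \<Delta> * L2_set (\<lambda>l. g l \<bullet> ee) S
      + 4 * (1 + sqrt 2) / \<Delta> * norm (pij j) * \<epsilon> + 8 / \<Delta>\<^sup>2 * \<epsilon>\<^sup>2)"
  proof (rule arith_final[OF norm_ge_zero norm_ge_zero L2_set_nonneg eps_nonneg Delta_pos X0])
    show "X \<le> 2 * sqrt 2 * \<epsilon> / \<Delta>" unfolding X_def by (rule X_le)
    show "0 \<le> sqrt 2" by simp
    have "sqrt 2 \<le> sqrt 4" by (rule real_sqrt_le_mono) simp
    then show "sqrt 2 \<le> 2" by simp
  qed (rule S1)
  define B where "B = 2 / \<Delta> * L2_set (\<lambda>l. g l \<bullet> ee) S + 4 * (1 + sqrt 2) / \<Delta> * norm (pij j) * \<epsilon> + 8 / \<Delta>\<^sup>2 * \<epsilon>\<^sup>2"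
  have B0: "0 \<le> B" unfolding B_def using Delta_pos eps_nonneg
    by (intro add_nonneg_nonneg mult_nonneg_nonneg divide_nonneg_pos L2_set_nonneg) simp_all
  have "(L2_set a S)\<^sup>2 \<le> B * L2_set a S"
    using fin unfolding B_def nv2[symmetric] nv by (simp add: mult.commute)
  then have "L2_set a S \<le> B" by (rule sq_le_lin[OF _ B0 L2_set_nonneg])
  then show ?thesis unfolding B_def a_def ee_def norm_pij .
qed

end



theorem mainTheorem8:
  fixes Q Qh :: "real^'p^'p"
    and r s t :: nat
    and \<sigma> \<sigma>h :: "nat \<Rightarrow> real"
    and g h gh hh :: "nat \<Rightarrow> real^'p"
  assumes rank_Q: "rank Q = r"
    and svd_Q: "Q = (\<Sum>i=1..r. \<sigma> i *\<^sub>R outer (g i) (h i))"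
    and sig_pos: "\<forall>i\<in>{1..r}. \<sigma> i > 0"
    and sig_mono: "\<forall>i\<in>{1..r}. \<forall>k\<in>{1..r}. i \<le> k \<longrightarrow> \<sigma> k \<le> \<sigma> i"
    and g_on: "orthonormal_on {1..r} g"
    and h_on: "orthonormal_on {1..r} h"
    and svd_Qh: "Qh = (\<Sum>i=1..CARD('p). \<sigma>h i *\<^sub>R outer (gh i) (hh i))"
    and sigh_nonneg: "\<forall>i\<in>{1..CARD('p)}. \<sigma>h i \<ge> 0"
    and sigh_mono: "\<forall>i\<in>{1..CARD('p)}. \<forall>k\<in>{1..CARD('p)}. i \<le> k \<longrightarrow> \<sigma>h k \<le> \<sigma>h i"
    and gh_on: "orthonormal_on {1..CARD('p)} gh"
    and hh_on: "orthonormal_on {1..CARD('p)} hh"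
    and st: "1 \<le> s" "s \<le> t" "t \<le> r"
    and Delta_pos: "gapDelta \<sigma> r s t > 0"
    and pert: "spec_norm (Qh - Q) \<le> gapDelta \<sigma> r s t / 2"
  shows "\<exists>\<Omega> :: nat \<Rightarrow> nat \<Rightarrow> real.
           (\<forall>l\<in>{s..t}. \<forall>l'\<in>{s..t}. (\<Sum>m=s..t. \<Omega> m l * \<Omega> m l') = (if l = l' then 1 else 0)) \<and>
           (\<forall>j::'p.
              L2_set (\<lambda>l. (\<Sum>m=s..t. hh m $ j * \<Omega> m l) - h l $ j) {s..t}
              \<le> 2 / gapDelta \<sigma> r s t * L2_set (\<lambda>l. g l \<bullet> ((Qh - Q) *v axis j 1)) {s..t}
                + 4 * (1 + sqrt 2) / gapDelta \<sigma> r s t * L2_set (\<lambda>i. h i $ j) {1..r} * spec_norm (Qh - Q)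
                + 8 / (gapDelta \<sigma> r s t)\<^sup>2 * (spec_norm (Qh - Q))\<^sup>2)"
proof -
  interpret setting Q Qh r s t \<sigma> \<sigma>h g h gh hh
    by (unfold_locales; fact)
  have orth: "(\<Sum>m=s..t. (hh m \<bullet> ww l) * (hh m \<bullet> ww l')) = (if l = l' then 1 else 0)"
    if l: "l \<in> {s..t}" and l': "l' \<in> {s..t}" for l l'
  proof -
    have "(\<Sum>m=s..t. (hh m \<bullet> ww l) * (hh m \<bullet> ww l')) = Vc (ww l) \<bullet> ww l'"
      unfolding Vc_def inner_sum_left inner_scaleR_left ..
    also have "\<dots> = ww l \<bullet> ww l'" using ww_Vc[OF l] by simp
    also have "\<dots> = (if l = l' then 1 else 0)" using ww_on l l' unfolding orthonormal_on_def by blast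
    finally show ?thesis .
  qed
  have comp: "(\<Sum>m=s..t. hh m $ j * (hh m \<bullet> ww l)) = ww l $ j" if l: "l \<in> {s..t}" for l and j :: 'p
  proof -
    have "(\<Sum>m=s..t. hh m $ j * (hh m \<bullet> ww l)) = Vc (ww l) $ j"
      unfolding Vc_def sum_component by (simp add: mult.commute)
    also have "\<dots> = ww l $ j" using ww_Vc[OF l] by simp
    finally show ?thesis .
  qed
  show ?thesis
  proof (rule exI[of _ "\<lambda>m l. hh m \<bullet> ww l"], intro conjI ballI allI)
    fix l l' assume "l \<in> {s..t}" "l' \<in> {s..t}"
    then show "(\<Sum>m=s..t. (hh m \<bullet> ww l) * (hh m \<bullet> ww l')) = (if l = l' then 1 else 0)" by (rule orth)
  next
    fix j :: 'p
    have "L2_set (\<lambda>l. (\<Sum>m=s..t. hh m $ j * (hh m \<bullet> ww l)) - h l $ j) {s..t}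
        = L2_set (\<lambda>l. ww l $ j - h l $ j) {s..t}"
      by (rule L2_set_cong) (simp_all add: comp)
    also have "\<dots> \<le> 2 / gapDelta \<sigma> r s t * L2_set (\<lambda>l. g l \<bullet> ((Qh - Q) *v axis j 1)) {s..t}
                + 4 * (1 + sqrt 2) / gapDelta \<sigma> r s t * L2_set (\<lambda>i. h i $ j) {1..r} * spec_norm (Qh - Q)
                + 8 / (gapDelta \<sigma> r s t)\<^sup>2 * (spec_norm (Qh - Q))\<^sup>2"
      by (rule final_j)
    finally show "L2_set (\<lambda>l. (\<Sum>m=s..t. hh m $ j * (hh m \<bullet> ww l)) - h l $ j) {s..t}
              \<le> 2 / gapDelta \<sigma> r s t * L2_set (\<lambda>l. g l \<bullet> ((Qh - Q) *v axis j 1)) {s..t}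
                + 4 * (1 + sqrt 2) / gapDelta \<sigma> r s t * L2_set (\<lambda>i. h i $ j) {1..r} * spec_norm (Qh - Q)
                + 8 / (gapDelta \<sigma> r s t)\<^sup>2 * (spec_norm (Qh - Q))\<^sup>2" .
  qed
qed


end
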